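(* Let $\alpha,\beta,\gamma,\eta>0$ and $\rho\in(0,1)$ with $\gamma\geq\alpha$, and consider the system $$S'=-\beta IS+\gamma(1-S-I-R)+\eta R,\qquad I'=\rho\beta IS-\alpha I+\beta I(1-S-I-R),\qquad R'=\alpha I-\eta R.$$ Let $\mathcal{R}_0:=\rho\beta/\alpha$, $\kappa:=1+\alpha/\eta$, $\rho^*:=\frac{-\alpha+\sqrt{\alpha\gamma\kappa}}{\gamma\kappa-\alpha}$ and $$\mathcal{R}_C:=\rho(2-\rho)-\rho^2\frac{\gamma\kappa}{\alpha}+2\frac{\rho(1-\rho)}{\alpha}\sqrt{\alpha\gamma\kappa}.$$ Suppose $0<\rho<\rho^*$. Then: (a) if $\mathcal{R}_0<\mathcal{R}_C$, there are no endemic equilibria; (b) if $\mathcal{R}_C\leq\mathcal{R}_0<1$, there are two endemic equilibria $\mathcal{E}_\pm$, which coincide if $\mathcal{R}_C=\mathcal{R}_0$; (c) if $1\leq\mathcal{R}_0$, there is a unique endemic equilibrium $\mathcal{E}_+$. Moreover, at $\mathcal{R}_0=1$ (with $\beta$ as bifurcation parameter) a transcritical bifurcation of backward type occurs, and a branch of unstable endemic equilibria $\mathcal{E}_-$ emerges from the disease-free equilibrium $\mathcal{E}_0=(1,0,0)$.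
   Context: An endemic equilibrium is an equilibrium $(S^*,I^*,R^* )$ of the system with $I^*>0$ (and $S^*,R^*\ge 0$). At any such equilibrium $R^*=\frac{\alpha}{\eta}I^*$, $S^*=\frac{\gamma(1-\kappa I^* )+\alpha I^*}{\beta I^*+\gamma}$, and $I^*$ is a positive root of $\beta\kappa x^2+(\alpha(2-\rho)+\rho\gamma\kappa-\beta)x+\gamma(\alpha/\beta-\rho)=0$; $\mathcal{E}_\pm$ denote the equilibria corresponding to the larger ($+$) and smaller ($-$) root $I^*_\pm=\frac{1}{2\beta\kappa}\big[\beta-\rho\gamma\kappa-\alpha(2-\rho)\pm\sqrt{\Delta}\big]$, $\Delta$ the discriminant. A backward transcritical bifurcation at $\mathcal{R}_0=1$ means that $\mathcal{E}_0$ changes from locally asymptotically stable to unstable as $\mathcal{R}_0$ crosses $1$ from below, and for $\mathcal{R}_0$ slightly below $1$ there is a branch of unstable endemic equilibria bifurcating from $\mathcal{E}_0$ at $\mathcal{R}_0=1$. *)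

theory Defs
  imports "HOL-Analysis.Analysis"
begin

definition sir_field :: "real \<Rightarrow> real \<Rightarrow> real \<Rightarrow> real \<Rightarrow> real \<Rightarrow> real \<times> real \<times> real \<Rightarrow> real \<times> real \<times> real" where
  "sir_field \<alpha> \<beta> \<gamma> \<eta> \<rho> x =
     (case x of (S, I, R) \<Rightarrow>
       (- \<beta> * I * S + \<gamma> * (1 - S - I - R) + \<eta> * R,
        \<rho> * \<beta> * I * S - \<alpha> * I + \<beta> * I * (1 - S - I - R),
        \<alpha> * I - \<eta> * R))"

definition is_equilibrium :: "('a::real_normed_vector \<Rightarrow> 'a) \<Rightarrow> 'a \<Rightarrow> bool" where
  "is_equilibrium f e \<longleftrightarrow> f e = 0"

definition endemic_equilibrium :: "real \<Rightarrow> real \<Rightarrow> real \<Rightarrow> real \<Rightarrow> real \<Rightarrow> real \<times> real \<times> real \<Rightarrow> bool" where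
  "endemic_equilibrium \<alpha> \<beta> \<gamma> \<eta> \<rho> x \<longleftrightarrow>
     is_equilibrium (sir_field \<alpha> \<beta> \<gamma> \<eta> \<rho>) x \<and>
     (case x of (S, I, R) \<Rightarrow> I > 0 \<and> S \<ge> 0 \<and> R \<ge> 0)"

definition R0 :: "real \<Rightarrow> real \<Rightarrow> real \<Rightarrow> real" where
  "R0 \<alpha> \<beta> \<rho> = \<rho> * \<beta> / \<alpha>"

definition kappa :: "real \<Rightarrow> real \<Rightarrow> real" where
  "kappa \<alpha> \<eta> = 1 + \<alpha> / \<eta>"

definition rho_star :: "real \<Rightarrow> real \<Rightarrow> real \<Rightarrow> real" where
  "rho_star \<alpha> \<gamma> \<eta> =
     (- \<alpha> + sqrt (\<alpha> * \<gamma> * kappa \<alpha> \<eta>)) / (\<gamma> * kappa \<alpha> \<eta> - \<alpha>)"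

definition RC :: "real \<Rightarrow> real \<Rightarrow> real \<Rightarrow> real \<Rightarrow> real" where
  "RC \<alpha> \<gamma> \<eta> \<rho> =
     \<rho> * (2 - \<rho>) - \<rho>^2 * (\<gamma> * kappa \<alpha> \<eta> / \<alpha>)
     + 2 * (\<rho> * (1 - \<rho>) / \<alpha>) * sqrt (\<alpha> * \<gamma> * kappa \<alpha> \<eta>)"

text \<open>Discriminant of beta*kappa x^2 + (alpha(2-rho) + rho gamma kappa - beta) x + gamma(alpha/beta - rho).\<close>
definition disc :: "real \<Rightarrow> real \<Rightarrow> real \<Rightarrow> real \<Rightarrow> real \<Rightarrow> real" where
  "disc \<alpha> \<beta> \<gamma> \<eta> \<rho> =
     (\<alpha> * (2 - \<rho>) + \<rho> * \<gamma> * kappa \<alpha> \<eta> - \<beta>)^2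
     - 4 * (\<beta> * kappa \<alpha> \<eta>) * (\<gamma> * (\<alpha> / \<beta> - \<rho>))"

definition I_plus :: "real \<Rightarrow> real \<Rightarrow> real \<Rightarrow> real \<Rightarrow> real \<Rightarrow> real" where
  "I_plus \<alpha> \<beta> \<gamma> \<eta> \<rho> =
     (\<beta> - \<rho> * \<gamma> * kappa \<alpha> \<eta> - \<alpha> * (2 - \<rho>) + sqrt (disc \<alpha> \<beta> \<gamma> \<eta> \<rho>))
     / (2 * \<beta> * kappa \<alpha> \<eta>)"

definition I_minus :: "real \<Rightarrow> real \<Rightarrow> real \<Rightarrow> real \<Rightarrow> real \<Rightarrow> real" where
  "I_minus \<alpha> \<beta> \<gamma> \<eta> \<rho> =
     (\<beta> - \<rho> * \<gamma> * kappa \<alpha> \<eta> - \<alpha> * (2 - \<rho>) - sqrt (disc \<alpha> \<beta> \<gamma> \<eta> \<rho>))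
     / (2 * \<beta> * kappa \<alpha> \<eta>)"

text \<open>The equilibrium point corresponding to a value I* of the infected compartment.\<close>
definition eq_point :: "real \<Rightarrow> real \<Rightarrow> real \<Rightarrow> real \<Rightarrow> real \<Rightarrow> real \<times> real \<times> real" where
  "eq_point \<alpha> \<beta> \<gamma> \<eta> Ist =
     ((\<gamma> * (1 - kappa \<alpha> \<eta> * Ist) + \<alpha> * Ist) / (\<beta> * Ist + \<gamma>), Ist, \<alpha> / \<eta> * Ist)"

definition E_plus :: "real \<Rightarrow> real \<Rightarrow> real \<Rightarrow> real \<Rightarrow> real \<Rightarrow> real \<times> real \<times> real" where
  "E_plus \<alpha> \<beta> \<gamma> \<eta> \<rho> = eq_point \<alpha> \<beta> \<gamma> \<eta> (I_plus \<alpha> \<beta> \<gamma> \<eta> \<rho>)"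

definition E_minus :: "real \<Rightarrow> real \<Rightarrow> real \<Rightarrow> real \<Rightarrow> real \<Rightarrow> real \<times> real \<times> real" where
  "E_minus \<alpha> \<beta> \<gamma> \<eta> \<rho> = eq_point \<alpha> \<beta> \<gamma> \<eta> (I_minus \<alpha> \<beta> \<gamma> \<eta> \<rho>)"

definition ode_solution_on :: "('a::real_normed_vector \<Rightarrow> 'a) \<Rightarrow> real \<Rightarrow> (real \<Rightarrow> 'a) \<Rightarrow> bool" where
  "ode_solution_on f T x \<longleftrightarrow>
     (\<forall>t\<in>{0..T}. (x has_vector_derivative f (x t)) (at t within {0..T}))"

definition ode_global_solution :: "('a::real_normed_vector \<Rightarrow> 'a) \<Rightarrow> (real \<Rightarrow> 'a) \<Rightarrow> bool" where
  "ode_global_solution f x \<longleftrightarrow>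
     (\<forall>t\<ge>0. (x has_vector_derivative f (x t)) (at t within {0..}))"

definition lyapunov_stable :: "('a::real_normed_vector \<Rightarrow> 'a) \<Rightarrow> 'a \<Rightarrow> bool" where
  "lyapunov_stable f e \<longleftrightarrow>
     (\<forall>\<epsilon>>0. \<exists>\<delta>>0. \<forall>x T. ode_solution_on f T x \<and> dist (x 0) e < \<delta> \<longrightarrow>
        (\<forall>t\<in>{0..T}. dist (x t) e < \<epsilon>))"

definition locally_attractive :: "('a::real_normed_vector \<Rightarrow> 'a) \<Rightarrow> 'a \<Rightarrow> bool" where
  "locally_attractive f e \<longleftrightarrow>
     (\<exists>\<delta>>0. \<forall>x. ode_global_solution f x \<and> dist (x 0) e < \<delta> \<longrightarrow> (x \<longlongrightarrow> e) at_top)"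

definition loc_asympt_stable :: "('a::real_normed_vector \<Rightarrow> 'a) \<Rightarrow> 'a \<Rightarrow> bool" where
  "loc_asympt_stable f e \<longleftrightarrow> is_equilibrium f e \<and> lyapunov_stable f e \<and> locally_attractive f e"

definition unstable :: "('a::real_normed_vector \<Rightarrow> 'a) \<Rightarrow> 'a \<Rightarrow> bool" where
  "unstable f e \<longleftrightarrow> is_equilibrium f e \<and> \<not> lyapunov_stable f e"

end

theory Submission
  imports Defs "HOL-Library.Quadratic_Discriminant"
begin

lemma exp_integral:
  fixes K u :: real
  assumes "K > 0" "u \<ge> 0"
  shows "integral {0..u} (\<lambda>s. exp (K * s)) = (exp (K * u) - 1) / K"
proof -
  have "((\<lambda>s. exp (K * s)) has_integral (exp (K * u) / K - exp (K * 0) / K)) {0..u}"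
    apply (rule fundamental_theorem_of_calculus[OF assms(2)])
    using assms(1) by (auto intro!: derivative_eq_intros simp: has_real_derivative_iff_has_vector_derivative[symmetric])
  then show ?thesis using assms by (simp add: integral_unique diff_divide_distrib)
qed

definition clampT :: "real \<Rightarrow> real \<Rightarrow> real" where
  "clampT T t = max 0 (min T t)"

lemma clampT_in: "T \<ge> 0 \<Longrightarrow> clampT T t \<in> {0..T}"
  by (auto simp: clampT_def)

lemma clampT_id: "t \<in> {0..T} \<Longrightarrow> clampT T t = t"
  by (auto simp: clampT_def)

lemma continuous_clampT: "continuous_on UNIV (clampT T)"
  unfolding clampT_def by (intro continuous_intros)

lemma lip_cont:
  fixes f :: "'a::metric_space \<Rightarrow> 'b::metric_space"
  assumes "\<forall>x y. dist (f x) (f y) \<le> L * dist x y"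
  shows "continuous_on S f"
proof -
  have "L \<ge> 0 \<or> (\<forall>x y. f x = f y)"
  proof (cases "L \<ge> 0")
    case False
    { fix x y have "dist (f x) (f y) \<le> L * dist x y" using assms by auto
      moreover have "L * dist x y \<le> 0" using False by (simp add: mult_nonpos_nonneg)
      ultimately have "f x = f y" by (metis dist_le_zero_iff order_trans) }
    then show ?thesis by auto
  qed simp
  then show ?thesis
  proof
    assume "L \<ge> 0"
    show ?thesis
      unfolding continuous_on_iff
    proof (intro ballI allI impI)
      fix x e assume "x \<in> S" "(0::real) < e"
      show "\<exists>d>0. \<forall>x'\<in>S. dist x' x < d \<longrightarrow> dist (f x') (f x) < e"
      proof (intro exI[of _ "e / (L + 1)"] conjI ballI impI)
        show "e / (L+1) > 0" using \<open>e > 0\<close> \<open>L \<ge> 0\<close> by simp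
        fix x' assume "dist x' x < e / (L + 1)"
        then have "(L+1) * dist x' x < e" using \<open>L \<ge> 0\<close> by (simp add: field_simps)
        moreover have "dist (f x') (f x) \<le> L * dist x' x" using assms by auto
        moreover have "L * dist x' x \<le> (L+1) * dist x' x" by (simp add: distrib_right)
        ultimately show "dist (f x') (f x) < e" by linarith
      qed
    qed
  next
    assume "\<forall>x y. f x = f y"
    then have "f = (\<lambda>_. f undefined)" by auto
    then show ?thesis by (metis continuous_on_const)
  qed
qed

lemma picard_existence:
  fixes f :: "'a::banach \<Rightarrow> 'a"
  assumes L: "L > 0" "\<forall>x y. dist (f x) (f y) \<le> L * dist x y" and T: "T \<ge> 0"
  shows "\<exists>x. x 0 = x0 \<and> (\<forall>t\<in>{0..T}. (x has_vector_derivative f (x t)) (at t within {0..T}))"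
proof -
  define K where "K = 2 * L"
  have K: "K > 0" using L by (simp add: K_def)
  have fc: "continuous_on S f" for S using lip_cont[OF L(2)] .
  define F where "F = (\<lambda>(v::real \<Rightarrow>\<^sub>C 'a) u. x0 + integral {0..u} (\<lambda>s. f (exp (K * s) *\<^sub>R v s)))"
  define G where "G = (\<lambda>v u. exp (- K * u) *\<^sub>R F v u)"
  have contI: "continuous_on {0..T} (\<lambda>s. f (exp (K * s) *\<^sub>R apply_bcontfun v s))" for v
    by (intro continuous_on_compose2[OF fc[of UNIV]] continuous_intros) auto
  have derF: "(F v has_vector_derivative f (exp (K * u) *\<^sub>R v u)) (at u within {0..T})"
    if "u \<in> {0..T}" for v u
    unfolding F_def
    using has_vector_derivative_add[OF has_vector_derivative_const integral_has_vector_derivative[OF contI that], of x0] by simp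
  have contF: "continuous_on {0..T} (F v)" for v
    using derF by (meson continuous_on_eq_continuous_within has_vector_derivative_continuous)
  have contG: "continuous_on {0..T} (G v)" for v
    unfolding G_def by (intro continuous_intros contF)
  have Gb: "(\<lambda>t. G v (clampT T t)) \<in> bcontfun" for v
  proof -
    have c: "continuous_on UNIV (\<lambda>t. G v (clampT T t))"
      by (rule continuous_on_compose2[OF contG continuous_clampT]) (use clampT_in[OF T] in auto)
    have "range (\<lambda>t. G v (clampT T t)) \<subseteq> G v ` {0..T}" using clampT_in[OF T] by auto
    moreover have "compact (G v ` {0..T})" by (intro compact_continuous_image contG) auto
    ultimately have "bounded (range (\<lambda>t. G v (clampT T t)))"
      by (meson bounded_subset compact_imp_bounded)
    with c show ?thesis by (simp add: bcontfun_def)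
  qed
  define \<Phi> where "\<Phi> = (\<lambda>v. Bcontfun (\<lambda>t. G v (clampT T t)))"
  have \<Phi>_app: "apply_bcontfun (\<Phi> v) t = G v (clampT T t)" for v t
    unfolding \<Phi>_def using Gb by (simp add: Bcontfun_inverse)
  have contr: "dist (\<Phi> v) (\<Phi> w) \<le> (1/2) * dist v w" for v w
  proof (rule dist_bound)
    fix t
    define u where "u = clampT T t"
    have u: "u \<in> {0..T}" using clampT_in[OF T] by (simp add: u_def)
    define d where "d = dist v w"
    have d: "d \<ge> 0" by (simp add: d_def)
    let ?g = "\<lambda>s. f (exp (K * s) *\<^sub>R v s) - f (exp (K * s) *\<^sub>R w s)"
    have intv: "(\<lambda>s. f (exp (K * s) *\<^sub>R apply_bcontfun v s)) integrable_on {0..u}" for v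
      by (rule integrable_continuous_interval) (rule continuous_on_subset[OF contI], use u in auto)
    have "G v u - G w u = exp (- K * u) *\<^sub>R (integral {0..u} ?g)"
      unfolding G_def F_def integral_diff[OF intv intv] by (simp add: scaleR_diff_right scaleR_add_right)
    then have "norm (G v u - G w u) = exp (- K * u) * norm (integral {0..u} ?g)" by simp
    also have "\<dots> \<le> exp (- K * u) * integral {0..u} (\<lambda>s. L * d * exp (K * s))"
    proof (rule mult_left_mono[OF integral_norm_bound_integral])
      show "?g integrable_on {0..u}" by (intro integrable_diff intv)
      show "(\<lambda>s. L * d * exp (K * s)) integrable_on {0..u}"
        by (intro integrable_continuous_interval continuous_intros)
      fix s assume s: "s \<in> {0..u}"
      have "norm (?g s) \<le> L * dist (exp (K * s) *\<^sub>R v s) (exp (K * s) *\<^sub>R w s)"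
        using L(2) by (simp add: dist_norm)
      also have "dist (exp (K * s) *\<^sub>R v s) (exp (K * s) *\<^sub>R w s) = exp (K * s) * dist (v s) (w s)"
        by (simp add: dist_norm scaleR_diff_right[symmetric])
      also have "L * (exp (K * s) * dist (v s) (w s)) \<le> L * d * exp (K * s)"
        using dist_bounded[of v s w] L(1) unfolding d_def by (simp add: mult_left_mono)
      finally show "norm (?g s) \<le> L * d * exp (K * s)" by simp
    qed simp
    also have "integral {0..u} (\<lambda>s. L * d * exp (K * s)) = L * d * ((exp (K * u) - 1) / K)"
      using exp_integral[OF K, of u] u by simp
    also have "exp (- K * u) * (L * d * ((exp (K * u) - 1) / K)) = (L * d / K) * (1 - exp (- K * u))"
      using K by (simp add: field_simps exp_minus)
    also have "\<dots> \<le> (L * d / K) * 1"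
      using K L d by (intro mult_left_mono) auto
    also have "\<dots> = (1/2) * d" using L by (simp add: K_def)
    finally show "dist (apply_bcontfun (\<Phi> v) t) (apply_bcontfun (\<Phi> w) t) \<le> 1 / 2 * dist v w"
      by (simp add: \<Phi>_app dist_norm u_def d_def)
  qed
  obtain v where v: "\<Phi> v = v" using banach_fix_type[of "1/2" \<Phi>] contr by auto
  define x where "x = (\<lambda>t. exp (K * t) *\<^sub>R apply_bcontfun v t)"
  have xF: "x t = F v t" if "t \<in> {0..T}" for t
  proof -
    have "apply_bcontfun v t = G v t" using \<Phi>_app[of v t] v clampT_id[OF that] by simp
    then show ?thesis unfolding x_def G_def by (simp add: exp_minus field_simps)
  qed
  have "x 0 = x0" using xF[of 0] T by (simp add: F_def)
  moreover have "(x has_vector_derivative f (x t)) (at t within {0..T})" if t: "t \<in> {0..T}" for t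
  proof -
    have "(F v has_vector_derivative f (x t)) (at t within {0..T})"
      using derF[OF t] by (simp add: x_def)
    then show ?thesis by (rule has_vector_derivative_transform[OF t xF, rotated])
  qed
  ultimately show ?thesis by blast
qed

lemma first_exit:
  fixes g :: "real \<Rightarrow> real"
  assumes cont: "continuous_on {0..T} g" and g0: "g 0 < c" and T: "T \<ge> 0"
    and H: "\<And>t1. t1 \<in> {0..T} \<Longrightarrow> (\<forall>t\<in>{0..t1}. g t \<le> c) \<Longrightarrow> g t1 < c"
  shows "\<forall>t\<in>{0..T}. g t < c"
proof (rule ccontr)
  define A where "A = {t \<in> {0..T}. c \<le> g t}"
  assume "\<not> (\<forall>t\<in>{0..T}. g t < c)"
  then have ne: "A \<noteq> {}" by (auto simp: A_def not_less)
  have cl: "closed A" unfolding A_def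
    by (rule continuous_on_closed_Collect_le[OF continuous_on_const cont]) auto
  have bdd: "bdd_below A" unfolding A_def by (auto intro: bdd_belowI[of _ 0])
  define t1 where "t1 = Inf A"
  have t1A: "t1 \<in> A" using closed_contains_Inf[OF ne bdd cl] by (simp add: t1_def)
  then have t1: "t1 \<in> {0..T}" "c \<le> g t1" by (auto simp: A_def)
  have below: "g t < c" if "t \<in> {0..<t1}" for t
  proof (rule ccontr)
    assume "\<not> g t < c"
    then have "t \<in> A" using that t1 by (auto simp: A_def)
    then have "t1 \<le> t" unfolding t1_def using bdd by (rule cInf_lower)
    then show False using that by auto
  qed
  have "\<forall>t\<in>{0..t1}. g t \<le> c"
  proof (cases "t1 = 0")
    case True
    then show ?thesis using g0 by auto
  next
    case False
    then have pos: "0 < t1" using t1 by auto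
    have "closed {t \<in> {0..t1}. g t \<le> c}"
      by (rule continuous_on_closed_Collect_le[OF continuous_on_subset[OF cont] continuous_on_const]) (use t1 in auto)
    moreover have "{0..<t1} \<subseteq> {t \<in> {0..t1}. g t \<le> c}" using below by fastforce
    ultimately have "closure {0..<t1} \<subseteq> {t \<in> {0..t1}. g t \<le> c}" by (rule closure_minimal[rotated])
    then show ?thesis using pos by auto
  qed
  then have "g t1 < c" using H[OF t1(1)] by auto
  then show False using t1 by simp
qed

lemma sol_cont:
  assumes "\<forall>t\<in>{0..T}. (x has_vector_derivative f (x t)) (at t within {0..T})"
  shows "continuous_on {0..T} x"
  using assms by (meson continuous_on_eq_continuous_within has_vector_derivative_continuous)

lemma ls_long:
  fixes f :: "'a::euclidean_space \<Rightarrow> 'a"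
  assumes LS: "lyapunov_stable f e" and eps: "\<epsilon> > 0" and L: "L > 0"
    and Lip: "\<forall>x\<in>cball e \<epsilon>. \<forall>y\<in>cball e \<epsilon>. dist (f x) (f y) \<le> L * dist x y"
  shows "\<exists>\<delta>>0. \<forall>x0 T. dist x0 e < \<delta> \<longrightarrow> T \<ge> 0 \<longrightarrow>
           (\<exists>x. x 0 = x0 \<and> ode_solution_on f T x \<and> (\<forall>t\<in>{0..T}. dist (x t) e < \<epsilon>))"
proof -
  obtain \<delta> where d: "\<delta> > 0" and dH: "\<And>x T. ode_solution_on f T x \<Longrightarrow> dist (x 0) e < \<delta> \<Longrightarrow>
      \<forall>t\<in>{0..T}. dist (x t) e < \<epsilon>"
    using LS eps unfolding lyapunov_stable_def by meson
  define cp where "cp = closest_point (cball e \<epsilon>)"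
  define g where "g = (\<lambda>y. f (cp y))"
  have cpin: "cp y \<in> cball e \<epsilon>" for y
    unfolding cp_def using eps by (intro closest_point_in_set) auto
  have cpid: "y \<in> cball e \<epsilon> \<Longrightarrow> cp y = y" for y unfolding cp_def by (rule closest_point_self)
  have glip: "\<forall>x y. dist (g x) (g y) \<le> L * dist x y"
  proof (intro allI)
    fix x y
    have "dist (g x) (g y) \<le> L * dist (cp x) (cp y)" unfolding g_def using Lip cpin by blast
    also have "\<dots> \<le> L * dist x y" unfolding cp_def using L eps
      by (intro mult_left_mono closest_point_lipschitz) auto
    finally show "dist (g x) (g y) \<le> L * dist x y" .
  qed
  show ?thesis
  proof (intro exI[of _ \<delta>] conjI allI impI d)
    fix x0 T assume x0: "dist x0 e < \<delta>" and T: "(T::real) \<ge> 0"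
    obtain x where x0e: "x 0 = x0" and xs: "\<forall>t\<in>{0..T}. (x has_vector_derivative g (x t)) (at t within {0..T})"
      using picard_existence[OF L glip T] by blast
    have xc: "continuous_on {0..T} x" by (rule sol_cont[OF xs])
    have inball: "\<forall>t\<in>{0..T}. dist (x t) e < \<epsilon>"
    proof (rule first_exit[where g = "\<lambda>t. dist (x t) e"])
      show "continuous_on {0..T} (\<lambda>t. dist (x t) e)" by (intro continuous_intros xc)
      have "ode_solution_on f 0 (\<lambda>t. x0 + t *\<^sub>R f x0)" unfolding ode_solution_on_def
        by (auto intro!: derivative_eq_intros)
      then show "dist (x 0) e < \<epsilon>"
        using dH[of 0 "\<lambda>t. x0 + t *\<^sub>R f x0"] x0 x0e by auto
      fix t1 assume t1: "t1 \<in> {0..T}" and le: "\<forall>t\<in>{0..t1}. dist (x t) e \<le> \<epsilon>"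
      have "ode_solution_on f t1 x" unfolding ode_solution_on_def
      proof
        fix t assume t: "t \<in> {0..t1}"
        have "(x has_vector_derivative g (x t)) (at t within {0..t1})"
          by (rule has_vector_derivative_within_subset[OF xs[rule_format]]) (use t t1 in auto)
        moreover have "g (x t) = f (x t)" unfolding g_def using le t cpid by (simp add: dist_commute)
        ultimately show "(x has_vector_derivative f (x t)) (at t within {0..t1})" by simp
      qed
      then show "dist (x t1) e < \<epsilon>" using dH x0 x0e t1 by auto
    qed (use T in auto)
    have "ode_solution_on f T x" unfolding ode_solution_on_def
    proof
      fix t assume t: "t \<in> {0..T}"
      have "g (x t) = f (x t)" unfolding g_def using inball t cpid by (simp add: dist_commute less_imp_le)
      then show "(x has_vector_derivative f (x t)) (at t within {0..T})" using xs t by metis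
    qed
    then show "\<exists>x. x 0 = x0 \<and> ode_solution_on f T x \<and> (\<forall>t\<in>{0..T}. dist (x t) e < \<epsilon>)"
      using x0e inball by blast
  qed
qed

lemma mono_from_deriv:
  fixes h h' :: "real \<Rightarrow> real"
  assumes T: "T \<ge> 0" and d: "\<And>t. t \<in> {0..T} \<Longrightarrow> (h has_real_derivative h' t) (at t within {0..T})"
    and nn: "\<And>t. t \<in> {0..T} \<Longrightarrow> h' t \<ge> 0"
  shows "h 0 \<le> h T"
proof (rule DERIV_nonneg_imp_increasing_open[OF T])
  fix t assume t: "0 < t" "t < T"
  have "(h has_real_derivative h' t) (at t)"
    using d[of t] t by (simp add: at_within_Icc_at)
  then show "\<exists>y. (h has_real_derivative y) (at t) \<and> 0 \<le> y" using nn[of t] t by auto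
next
  show "continuous_on {0..T} h"
    using d by (meson DERIV_continuous continuous_on_eq_continuous_within)
qed

lemma chain_sol:
  fixes W :: "'a::real_normed_vector \<Rightarrow> real"
  assumes "(x has_vector_derivative v) (at t within S)"
    and "(W has_derivative DW) (at (x t))"
  shows "((\<lambda>s. W (x s)) has_real_derivative DW v) (at t within S)"
proof -
  have "((W \<circ> x) has_vector_derivative DW v) (at t within S)"
    by (rule vector_derivative_diff_chain_within[OF assms(1) has_derivative_subset[OF assms(2)]]) simp
  then show ?thesis by (simp add: has_real_derivative_iff_has_vector_derivative o_def)
qed

lemma growth_sol:
  fixes W :: "'a::real_normed_vector \<Rightarrow> real"
  assumes T: "T \<ge> 0" and xs: "ode_solution_on f T x"
    and Wd: "\<And>y. (W has_derivative DW y) (at y)"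
    and gr: "\<And>t. t \<in> {0..T} \<Longrightarrow> DW (x t) (f (x t)) \<ge> c * W (x t)"
  shows "W (x T) \<ge> exp (c * T) * W (x 0)"
proof -
  define h where "h = (\<lambda>t. exp (- c * t) * W (x t))"
  have "h 0 \<le> h T"
  proof (rule mono_from_deriv[OF T])
    fix t assume t: "t \<in> {0..T}"
    have "((\<lambda>s. W (x s)) has_real_derivative DW (x t) (f (x t))) (at t within {0..T})"
      using xs t Wd unfolding ode_solution_on_def by (blast intro: chain_sol)
    then show "(h has_real_derivative (exp (- c * t) * (DW (x t) (f (x t)) - c * W (x t)))) (at t within {0..T})"
      unfolding h_def by (auto intro!: derivative_eq_intros simp: algebra_simps)
    show "exp (- c * t) * (DW (x t) (f (x t)) - c * W (x t)) \<ge> 0" using gr[OF t] by simp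
  qed
  then have "W (x 0) \<le> exp (- c * T) * W (x T)" by (simp add: h_def)
  then have "exp (c * T) * W (x 0) \<le> exp (c * T) * (exp (- c * T) * W (x T))" by simp
  also have "\<dots> = W (x T)" by (simp add: exp_minus field_simps)
  finally show ?thesis .
qed

lemma chetaev_unstable:
  fixes f :: "'a::euclidean_space \<Rightarrow> 'a" and W :: "'a \<Rightarrow> real"
  assumes eq: "f e = 0" and eps: "\<epsilon> > 0" and L: "L > 0"
    and Lip: "\<forall>x\<in>cball e \<epsilon>. \<forall>y\<in>cball e \<epsilon>. dist (f x) (f y) \<le> L * dist x y"
    and Wd: "\<And>y. (W has_derivative DW y) (at y)"
    and c: "c > 0"
    and gr: "\<And>y. y \<in> cball e \<epsilon> \<Longrightarrow> DW y (f y) \<ge> c * W y"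
    and bd: "\<And>y. y \<in> cball e \<epsilon> \<Longrightarrow> W y \<le> B"
    and pos: "\<And>\<delta>. \<delta> > 0 \<Longrightarrow> \<exists>y. dist y e < \<delta> \<and> W y > 0"
  shows "unstable f e"
  unfolding unstable_def is_equilibrium_def
proof (intro conjI notI eq)
  assume LS: "lyapunov_stable f e"
  obtain \<delta> where d: "\<delta> > 0" and dH: "\<And>x0 T. dist x0 e < \<delta> \<Longrightarrow> T \<ge> 0 \<Longrightarrow>
           (\<exists>x. x 0 = x0 \<and> ode_solution_on f T x \<and> (\<forall>t\<in>{0..T}. dist (x t) e < \<epsilon>))"
    using ls_long[OF LS eps L Lip] by blast
  obtain y where y: "dist y e < \<delta>" "W y > 0" using pos[OF d] by blast
  define T where "T = max 0 ((B / W y) / c)"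
  have T: "T \<ge> 0" by (simp add: T_def)
  obtain x where x: "x 0 = y" "ode_solution_on f T x" "\<forall>t\<in>{0..T}. dist (x t) e < \<epsilon>"
    using dH[OF y(1) T] by blast
  have "W (x T) \<ge> exp (c * T) * W (x 0)"
    by (rule growth_sol[OF T x(2) Wd gr]) (use x(3) in \<open>auto simp: dist_commute less_imp_le\<close>)
  moreover have "exp (c * T) > B / W y"
  proof -
    have "exp (c * T) > c * T" using exp_gt_zero[of "c*T"] add_strict_increasing[of 0 1 "c*T"]
      by (smt (verit) exp_ge_add_one_self)
    moreover have "c * T \<ge> B / W y"
    proof -
      have "c * T \<ge> c * ((B / W y) / c)" using c by (intro mult_left_mono) (auto simp: T_def)
      then show ?thesis using c by simp
    qed
    ultimately show ?thesis by linarith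
  qed
  then have "exp (c * T) * W y > B" using y(2) by (simp add: field_simps)
  moreover have "W (x T) \<le> B" using bd x(3) T by (auto simp: dist_commute less_imp_le)
  ultimately show False using x(1) by simp
qed

lemma restrict_sol:
  assumes "ode_solution_on f T x" "t1 \<in> {0..T}"
  shows "ode_solution_on f t1 x"
  using assms unfolding ode_solution_on_def
  by (meson atLeastAtMost_iff atLeastatMost_subset_iff has_vector_derivative_within_subset order_refl order_trans)

lemma lyap_stay:
  fixes f :: "'a::real_normed_vector \<Rightarrow> 'a" and V :: "'a \<Rightarrow> real"
  assumes r0: "r0 > 0"
    and Vd: "\<And>y. (V has_derivative DV y) (at y)"
    and c: "c > 0" and m: "m > 0" and M: "M > 0"
    and dec: "\<And>y. y \<in> cball e r0 \<Longrightarrow> DV y (f y) \<le> - c * V y"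
    and lo: "\<And>y. y \<in> cball e r0 \<Longrightarrow> m * (dist y e)^2 \<le> V y"
    and hi: "\<And>y. y \<in> cball e r0 \<Longrightarrow> V y \<le> M * (dist y e)^2"
    and eps: "0 < \<epsilon>" "\<epsilon> \<le> r0"
  shows "\<exists>\<delta>>0. \<forall>x T. ode_solution_on f T x \<and> dist (x 0) e < \<delta> \<longrightarrow>
           (\<forall>t\<in>{0..T}. dist (x t) e < \<epsilon> \<and> V (x t) \<le> exp (- c * t) * V (x 0))"
proof -
  define q where "q = min 1 (sqrt (m / M))"
  have q: "q > 0" "q \<le> 1" "q\<^sup>2 \<le> m / M" using m M by (auto simp: q_def min_def)
  define \<delta> where "\<delta> = \<epsilon> * q / 2"
  have d: "\<delta> > 0" "\<delta> < \<epsilon>" using q eps by (auto simp: \<delta>_def)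
  have Md: "M * \<delta>^2 < m * \<epsilon>^2"
  proof -
    have "M * \<delta>^2 = M * q^2 * \<epsilon>^2 / 4" unfolding \<delta>_def by (simp add: power_mult_distrib power_divide)
    also have "\<dots> \<le> M * (m / M) * \<epsilon>^2 / 4" using q M by (intro divide_right_mono mult_right_mono mult_left_mono) auto
    also have "\<dots> = m * \<epsilon>^2 / 4" using M by simp
    also have "\<dots> < m * \<epsilon>^2" using m eps by simp
    finally show ?thesis .
  qed
  have decay: "V (x t1) \<le> exp (- c * t1) * V (x 0)"
    if xs: "ode_solution_on f t1 x" and t1: "t1 \<ge> 0" and inb: "\<forall>t\<in>{0..t1}. dist (x t) e \<le> r0" for x t1
  proof -
    have "- V (x t1) \<ge> exp ((- c) * t1) * (- V (x 0))"
    proof (rule growth_sol[OF t1 xs, where W = "\<lambda>y. - V y" and DW = "\<lambda>y h. - DV y h"])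
      show "((\<lambda>y. - V y) has_derivative (\<lambda>h. - DV y h)) (at y)" for y by (intro derivative_intros Vd)
      fix t assume "t \<in> {0..t1}"
      then have "x t \<in> cball e r0" using inb by (auto simp: dist_commute)
      then show "- DV (x t) (f (x t)) \<ge> (- c) * (- V (x t))" using dec by force
    qed
    then show ?thesis by simp
  qed
  show ?thesis
  proof (intro exI[of _ \<delta>] conjI allI impI d(1))
    fix x T assume H: "ode_solution_on f T x \<and> dist (x 0) e < \<delta>"
    then have xs: "ode_solution_on f T x" and x0: "dist (x 0) e < \<delta>" by auto
    have V0: "V (x 0) < m * \<epsilon>^2"
    proof -
      have "x 0 \<in> cball e r0" using x0 d eps by (auto simp: dist_commute)
      then have "V (x 0) \<le> M * (dist (x 0) e)^2" by (rule hi)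
      also have "\<dots> \<le> M * \<delta>^2" using M x0 by (intro mult_left_mono power_mono) auto
      finally show ?thesis using Md by linarith
    qed
    have V0nn: "V (x 0) \<ge> 0"
    proof -
      have "x 0 \<in> cball e r0" using x0 d eps by (auto simp: dist_commute)
      from lo[OF this] m show ?thesis by (smt (verit) zero_le_power2 mult_nonneg_nonneg)
    qed
    show "\<forall>t\<in>{0..T}. dist (x t) e < \<epsilon> \<and> V (x t) \<le> exp (- c * t) * V (x 0)"
    proof (cases "T \<ge> 0")
      case False then show ?thesis by simp
    next
      case T: True
      have stay: "\<forall>t\<in>{0..T}. dist (x t) e < \<epsilon>"
      proof (rule first_exit[where g = "\<lambda>t. dist (x t) e", OF _ _ T])
        show "continuous_on {0..T} (\<lambda>t. dist (x t) e)"
          using xs unfolding ode_solution_on_def by (intro continuous_intros sol_cont) auto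
        show "dist (x 0) e < \<epsilon>" using x0 d by simp
        fix t1 assume t1: "t1 \<in> {0..T}" and le: "\<forall>t\<in>{0..t1}. dist (x t) e \<le> \<epsilon>"
        have xs1: "ode_solution_on f t1 x" by (rule restrict_sol[OF xs t1])
        have inb: "\<forall>t\<in>{0..t1}. dist (x t) e \<le> r0" using le eps by force
        have "V (x t1) \<le> exp (- c * t1) * V (x 0)" using decay[OF xs1 _ inb] t1 by simp
        also have "\<dots> \<le> V (x 0)" using V0nn t1 c by (simp add: mult_left_le_one_le)
        finally have "V (x t1) < m * \<epsilon>^2" using V0 by linarith
        moreover have "m * (dist (x t1) e)^2 \<le> V (x t1)" using lo[of "x t1"] inb t1 by (auto simp: dist_commute)
        ultimately have "(dist (x t1) e)^2 < \<epsilon>^2" using m by (smt (verit) mult_left_mono)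
        then show "dist (x t1) e < \<epsilon>" using eps by (smt (verit) power_mono zero_le_dist)
      qed
      show ?thesis
      proof
        fix t assume t: "t \<in> {0..T}"
        have "\<forall>s\<in>{0..t}. dist (x s) e \<le> r0" using stay t eps by force
        then show "dist (x t) e < \<epsilon> \<and> V (x t) \<le> exp (- c * t) * V (x 0)"
          using stay t decay[OF restrict_sol[OF xs t]] by auto
      qed
    qed
  qed
qed

lemma lyap_las:
  fixes f :: "'a::real_normed_vector \<Rightarrow> 'a" and V :: "'a \<Rightarrow> real"
  assumes eq: "f e = 0" and r0: "r0 > 0"
    and Vd: "\<And>y. (V has_derivative DV y) (at y)"
    and c: "c > 0" and m: "m > 0" and M: "M > 0"
    and dec: "\<And>y. y \<in> cball e r0 \<Longrightarrow> DV y (f y) \<le> - c * V y"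
    and lo: "\<And>y. y \<in> cball e r0 \<Longrightarrow> m * (dist y e)^2 \<le> V y"
    and hi: "\<And>y. y \<in> cball e r0 \<Longrightarrow> V y \<le> M * (dist y e)^2"
  shows "loc_asympt_stable f e"
  unfolding loc_asympt_stable_def is_equilibrium_def
proof (intro conjI eq)
  note st = lyap_stay[OF r0 Vd c m M dec lo hi]
  show "lyapunov_stable f e" unfolding lyapunov_stable_def
  proof (intro allI impI)
    fix \<epsilon> :: real assume "\<epsilon> > 0"
    then obtain \<delta> where "\<delta> > 0" "\<forall>x T. ode_solution_on f T x \<and> dist (x 0) e < \<delta> \<longrightarrow>
           (\<forall>t\<in>{0..T}. dist (x t) e < min \<epsilon> r0 \<and> V (x t) \<le> exp (- c * t) * V (x 0))"
      using st[of "min \<epsilon> r0"] r0 by auto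
    then show "\<exists>\<delta>>0. \<forall>x T. ode_solution_on f T x \<and> dist (x 0) e < \<delta> \<longrightarrow> (\<forall>t\<in>{0..T}. dist (x t) e < \<epsilon>)"
      by (metis min_less_iff_conj)
  qed
  obtain \<delta> where d: "\<delta> > 0" and dH: "\<And>x T. ode_solution_on f T x \<Longrightarrow> dist (x 0) e < \<delta> \<Longrightarrow>
           (\<forall>t\<in>{0..T}. dist (x t) e < r0 \<and> V (x t) \<le> exp (- c * t) * V (x 0))"
    using st[of r0] r0 by blast
  show "locally_attractive f e" unfolding locally_attractive_def
  proof (intro exI[of _ \<delta>] conjI allI impI d)
    fix x assume H: "ode_global_solution f x \<and> dist (x 0) e < \<delta>"
    have sol: "ode_solution_on f T x" for T
      using H unfolding ode_global_solution_def ode_solution_on_def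
      by (metis atLeastAtMost_iff atLeast_iff has_vector_derivative_within_subset subsetI)
    have bnd: "dist (x t) e < r0 \<and> V (x t) \<le> exp (- c * t) * V (x 0)" if "t \<ge> 0" for t
      using dH[OF sol[of t]] H that by auto
    define V0 where "V0 = V (x 0)"
    show "(x \<longlongrightarrow> e) at_top"
      unfolding tendsto_iff
    proof (intro allI impI)
      fix \<epsilon> :: real assume eps: "\<epsilon> > 0"
      define N where "N = max 0 (V0 / (m * \<epsilon>^2) / c)"
      show "\<forall>\<^sub>F t in at_top. dist (x t) e < \<epsilon>"
        unfolding eventually_at_top_linorder
      proof (intro exI[of _ N] allI impI)
        fix t assume tN: "t \<ge> N"
        then have t0: "t \<ge> 0" by (simp add: N_def)
        have "x t \<in> cball e r0" using bnd[OF t0] by (simp add: dist_commute)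
        then have "m * (dist (x t) e)^2 \<le> V (x t)" by (rule lo)
        also have "\<dots> \<le> exp (- c * t) * V0" using bnd[OF t0] by (simp add: V0_def)
        also have "\<dots> < m * \<epsilon>^2"
        proof -
          have "exp (c * t) > c * t" by (smt (verit) exp_ge_add_one_self)
          moreover have "c * t \<ge> V0 / (m * \<epsilon>^2)"
          proof -
            have "c * t \<ge> c * (V0 / (m * \<epsilon>^2) / c)" using tN c by (intro mult_left_mono) (auto simp: N_def)
            then show ?thesis using c by simp
          qed
          ultimately have "exp (c * t) > V0 / (m * \<epsilon>^2)" by linarith
          then have "exp (c * t) * (m * \<epsilon>^2) > V0" using m eps by (simp add: field_simps)
          then show ?thesis by (simp add: exp_minus field_simps)
        qed
        finally have "(dist (x t) e)^2 < \<epsilon>^2" using m by simp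
        then show "dist (x t) e < \<epsilon>" using eps by (smt (verit) power_mono zero_le_dist)
      qed
    qed
  qed
qed

lemma dist3: "dist ((a::real),(b::real),(c::real)) (a',b',c') = sqrt((a-a')^2 + (b-b')^2 + (c-c')^2)"
  by (simp add: dist_prod_def dist_real_def add.assoc)

lemma dist3_sq: "(dist ((a::real),(b::real),(c::real)) (a',b',c'))^2 = (a-a')^2 + (b-b')^2 + (c-c')^2"
  unfolding dist3 by (simp add: add_nonneg_nonneg)

lemma sq_le_sqrt: "(x::real)^2 \<le> y \<Longrightarrow> \<bar>x\<bar> \<le> sqrt y"
  by (metis real_sqrt_abs real_sqrt_le_mono)

lemma dist3_comp:
  fixes a b c a' b' c' :: real
  shows "\<bar>a-a'\<bar> \<le> dist (a,b,c) (a',b',c')" "\<bar>b-b'\<bar> \<le> dist (a,b,c) (a',b',c')" "\<bar>c-c'\<bar> \<le> dist (a,b,c) (a',b',c')"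
  unfolding dist3 by (rule sq_le_sqrt; simp)+

lemma sum3_sq_le:
  fixes p q r :: real
  assumes "p \<ge> 0" "q \<ge> 0" "r \<ge> 0"
  shows "p^2 + q^2 + r^2 \<le> (p + q + r)^2"
proof -
  have e: "(p + q + r)^2 = p^2 + q^2 + r^2 + 2*(p*q + p*r + q*r)" by (simp add: power2_eq_square algebra_simps)
  have "p*q + p*r + q*r \<ge> 0" using assms by simp
  then show ?thesis unfolding e by simp
qed

lemma dist3_le:
  fixes a b c a' b' c' :: real
  shows "dist (a,b,c) (a',b',c') \<le> \<bar>a-a'\<bar> + \<bar>b-b'\<bar> + \<bar>c-c'\<bar>"
  unfolding dist3
proof (rule real_le_lsqrt)
  show "(a - a')\<^sup>2 + (b - b')\<^sup>2 + (c - c')\<^sup>2 \<le> (\<bar>a - a'\<bar> + \<bar>b - b'\<bar> + \<bar>c - c'\<bar>)\<^sup>2"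
    using sum3_sq_le[of "\<bar>a - a'\<bar>" "\<bar>b - b'\<bar>" "\<bar>c - c'\<bar>"] by simp
qed auto

lemma prod_lip:
  fixes a1 b1 a2 b2 B :: real
  assumes "\<bar>b1\<bar> \<le> B" "\<bar>a2\<bar> \<le> B"
  shows "\<bar>a1*b1 - a2*b2\<bar> \<le> B * \<bar>a1 - a2\<bar> + B * \<bar>b1 - b2\<bar>"
proof -
  have "a1*b1 - a2*b2 = (a1-a2)*b1 + a2*(b1-b2)" by (simp add: algebra_simps)
  then have "\<bar>a1*b1 - a2*b2\<bar> \<le> \<bar>a1-a2\<bar>*\<bar>b1\<bar> + \<bar>a2\<bar>*\<bar>b1-b2\<bar>" by (simp add: abs_mult[symmetric] abs_triangle_ineq)
  also have "\<dots> \<le> \<bar>a1-a2\<bar>*B + B*\<bar>b1-b2\<bar>" using assms by (intro add_mono mult_left_mono mult_right_mono) auto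
  finally show ?thesis by (simp add: mult.commute)
qed

lemma abs3: "\<bar>(a::real) + b + c\<bar> \<le> \<bar>a\<bar> + \<bar>b\<bar> + \<bar>c\<bar>"
  by (rule order_trans[OF abs_triangle_ineq add_mono[OF abs_triangle_ineq order_refl]])

lemma sir_field_simp:
  "sir_field \<alpha> \<beta> \<gamma> \<eta> \<rho> (S, I, R) =
       (- \<beta> * I * S + \<gamma> * (1 - S - I - R) + \<eta> * R,
        \<rho> * \<beta> * I * S - \<alpha> * I + \<beta> * I * (1 - S - I - R),
        \<alpha> * I - \<eta> * R)"
  by (simp add: sir_field_def)

lemma sir_lip:
  "\<exists>L>0. \<forall>x\<in>cball e r. \<forall>y\<in>cball e r. dist (sir_field \<alpha> \<beta> \<gamma> \<eta> \<rho> x) (sir_field \<alpha> \<beta> \<gamma> \<eta> \<rho> y) \<le> L * dist x y"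
proof -
  define B where "B = norm e + \<bar>r\<bar>"
  have B: "B \<ge> 0" by (simp add: B_def)
  have nb: "norm x \<le> B" if "x \<in> cball e r" for x :: "real \<times> real \<times> real"
    using that norm_triangle_ineq2[of x e] by (auto simp: B_def dist_norm norm_minus_commute)
  have cb: "\<bar>fst x\<bar> \<le> B \<and> \<bar>fst (snd x)\<bar> \<le> B \<and> \<bar>snd (snd x)\<bar> \<le> B" if "x \<in> cball e r" for x :: "real \<times> real \<times> real"
  proof -
    obtain a b c where x: "x = (a,b,c)" by (cases x) auto
    have nx: "norm x = dist (a,b,c) (0,0,0)" unfolding x by (simp add: dist_norm)
    have "\<bar>a\<bar> \<le> norm x" "\<bar>b\<bar> \<le> norm x" "\<bar>c\<bar> \<le> norm x"
      unfolding nx using dist3_comp[where a=a and b=b and c=c and a'=0 and b'=0 and c'=0] by auto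
    then show ?thesis using nb[OF that] x by auto
  qed
  define L where "L = 2*B*\<bar>\<beta>\<bar> + 3*\<bar>\<gamma>\<bar> + \<bar>\<eta>\<bar> + 2*B*\<bar>\<rho>*\<beta>\<bar> + \<bar>\<alpha>\<bar> + \<bar>\<beta>\<bar>*(1+6*B) + \<bar>\<alpha>\<bar> + \<bar>\<eta>\<bar> + 1"
  have L: "L > 0" unfolding L_def using B by (intro add_nonneg_pos) auto
  show ?thesis
  proof (intro exI[of _ L] conjI L ballI)
    fix x y :: "real \<times> real \<times> real" assume xb: "x \<in> cball e r" and yb: "y \<in> cball e r"
    obtain S1 I1 R1 where x: "x = (S1,I1,R1)" by (cases x) auto
    obtain S2 I2 R2 where y: "y = (S2,I2,R2)" by (cases y) auto
    define d where "d = dist x y"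
    have bx: "\<bar>S1\<bar> \<le> B" "\<bar>I1\<bar> \<le> B" "\<bar>R1\<bar> \<le> B" using cb[OF xb] x by auto
    have by': "\<bar>S2\<bar> \<le> B" "\<bar>I2\<bar> \<le> B" "\<bar>R2\<bar> \<le> B" using cb[OF yb] y by auto
    have dS: "\<bar>S1 - S2\<bar> \<le> d" and dI: "\<bar>I1 - I2\<bar> \<le> d" and dR: "\<bar>R1 - R2\<bar> \<le> d"
      unfolding d_def x y using dist3_comp by auto
    define PIS where "PIS = I1*S1 - I2*S2"
    define PII where "PII = I1*I1 - I2*I2"
    define PIR where "PIR = I1*R1 - I2*R2"
    have pl: "\<bar>a1*b1 - a2*b2\<bar> \<le> 2*B*d" if "\<bar>b1\<bar> \<le> B" "\<bar>a2\<bar> \<le> B" "\<bar>a1-a2\<bar> \<le> d" "\<bar>b1-b2\<bar> \<le> d" for a1 b1 a2 b2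
    proof -
      have "\<bar>a1*b1 - a2*b2\<bar> \<le> B * \<bar>a1 - a2\<bar> + B * \<bar>b1 - b2\<bar>" by (rule prod_lip[OF that(1,2)])
      also have "\<dots> \<le> B * d + B * d" using that B by (intro add_mono mult_left_mono) auto
      finally show ?thesis by simp
    qed
    have pIS: "\<bar>PIS\<bar> \<le> 2*B*d" unfolding PIS_def by (rule pl) (use bx by' dS dI in auto)
    have pII: "\<bar>PII\<bar> \<le> 2*B*d" unfolding PII_def by (rule pl) (use bx by' dS dI in auto)
    have pIR: "\<bar>PIR\<bar> \<le> 2*B*d" unfolding PIR_def by (rule pl) (use bx by' dR dI in auto)
    define c1 where "c1 = - \<beta> * PIS - \<gamma> * ((S1-S2) + (I1-I2) + (R1-R2)) + \<eta> * (R1 - R2)"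
    define c2 where "c2 = \<rho>*\<beta> * PIS - \<alpha> * (I1 - I2) + \<beta> * ((I1-I2) - PIS - PII - PIR)"
    define c3 where "c3 = \<alpha> * (I1 - I2) - \<eta> * (R1 - R2)"
    have eq: "dist (sir_field \<alpha> \<beta> \<gamma> \<eta> \<rho> x) (sir_field \<alpha> \<beta> \<gamma> \<eta> \<rho> y) =
        dist (c1, c2, c3) (0,0,0)"
      unfolding x y sir_field_simp dist3 c1_def c2_def c3_def PIS_def PII_def PIR_def
      by (simp add: algebra_simps)
    have "dist (c1, c2, c3) (0,0,0) \<le> \<bar>c1\<bar> + \<bar>c2\<bar> + \<bar>c3\<bar>" using dist3_le[of c1 c2 c3 0 0 0] by simp
    also have "\<bar>c1\<bar> \<le> \<bar>\<beta>\<bar> * (2*B*d) + \<bar>\<gamma>\<bar> * (3*d) + \<bar>\<eta>\<bar> * d"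
    proof -
      have "\<bar>c1\<bar> \<le> \<bar>\<beta>\<bar> * \<bar>PIS\<bar> + \<bar>\<gamma>\<bar> * \<bar>(S1-S2) + (I1-I2) + (R1-R2)\<bar> + \<bar>\<eta>\<bar> * \<bar>R1 - R2\<bar>"
        unfolding c1_def using abs3[of "- \<beta> * PIS" "- \<gamma> * ((S1-S2) + (I1-I2) + (R1-R2))" "\<eta> * (R1 - R2)"]
        by (simp add: abs_mult)
      also have "\<dots> \<le> \<bar>\<beta>\<bar> * (2*B*d) + \<bar>\<gamma>\<bar> * (3*d) + \<bar>\<eta>\<bar> * d"
        using pIS dS dI dR abs3[of "S1-S2" "I1-I2" "R1-R2"] by (intro add_mono mult_left_mono) auto
      finally show ?thesis .
    qed
    also have "\<bar>c2\<bar> \<le> \<bar>\<rho>*\<beta>\<bar> * (2*B*d) + \<bar>\<alpha>\<bar> * d + \<bar>\<beta>\<bar> * (d + 6*B*d)"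
    proof -
      have "\<bar>c2\<bar> \<le> \<bar>\<rho>*\<beta>\<bar> * \<bar>PIS\<bar> + \<bar>\<alpha>\<bar> * \<bar>I1 - I2\<bar> + \<bar>\<beta>\<bar> * \<bar>(I1-I2) - PIS - PII - PIR\<bar>"
        unfolding c2_def using abs3[of "\<rho>*\<beta> * PIS" "- \<alpha> * (I1 - I2)" "\<beta> * ((I1-I2) - PIS - PII - PIR)"]
        by (simp add: abs_mult)
      also have "\<dots> \<le> \<bar>\<rho>*\<beta>\<bar> * (2*B*d) + \<bar>\<alpha>\<bar> * d + \<bar>\<beta>\<bar> * (d + 6*B*d)"
      proof (intro add_mono mult_left_mono order_refl)
        show "\<bar>I1 - I2 - PIS - PII - PIR\<bar> \<le> d + 6 * B * d"
          using pIS pII pIR dI by linarith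
      qed (use pIS dI in auto)
      finally show ?thesis .
    qed
    also have "\<bar>c3\<bar> \<le> \<bar>\<alpha>\<bar> * d + \<bar>\<eta>\<bar> * d"
    proof -
      have "\<bar>c3\<bar> \<le> \<bar>\<alpha>\<bar> * \<bar>I1 - I2\<bar> + \<bar>\<eta>\<bar> * \<bar>R1 - R2\<bar>"
        unfolding c3_def using abs_triangle_ineq4[of "\<alpha> * (I1 - I2)" "\<eta> * (R1 - R2)"]
        by (simp add: abs_mult)
      also have "\<dots> \<le> \<bar>\<alpha>\<bar> * d + \<bar>\<eta>\<bar> * d" using dI dR by (intro add_mono mult_left_mono) auto
      finally show ?thesis .
    qed
    also have "\<bar>\<beta>\<bar> * (2*B*d) + \<bar>\<gamma>\<bar> * (3*d) + \<bar>\<eta>\<bar> * d + (\<bar>\<rho>*\<beta>\<bar> * (2*B*d) + \<bar>\<alpha>\<bar> * d + \<bar>\<beta>\<bar> * (d + 6*B*d)) + (\<bar>\<alpha>\<bar> * d + \<bar>\<eta>\<bar> * d)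
        = (L - 1) * d" unfolding L_def by (simp add: algebra_simps)
    also have "\<dots> \<le> L * d" unfolding d_def by (simp add: algebra_simps)
    finally show "dist (sir_field \<alpha> \<beta> \<gamma> \<eta> \<rho> x) (sir_field \<alpha> \<beta> \<gamma> \<eta> \<rho> y) \<le> L * dist x y"
      using eq by (simp add: d_def)
  qed
qed

lemma young: "(k::real) > 0 \<Longrightarrow> 2 * a * b \<le> k * a^2 + b^2 / k"
proof -
  assume k: "k > 0"
  have "0 \<le> (k * a - b)^2 / k" using k by simp
  also have "(k * a - b)^2 / k = k * a^2 - 2 * a * b + b^2 / k" using k
    by (simp add: power2_eq_square field_simps)
  finally show ?thesis by simp
qed

lemma dfe_las:
  fixes \<alpha> \<beta> \<gamma> \<eta> \<rho> :: real
  assumes pos: "\<alpha> > 0" "\<beta> > 0" "\<gamma> > 0" "\<eta> > 0" "0 < \<rho>" "\<rho> < 1" and sub: "\<rho> * \<beta> < \<alpha>"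
  shows "loc_asympt_stable (sir_field \<alpha> \<beta> \<gamma> \<eta> \<rho>) (1, 0, 0)"
proof -
  define lam where "lam = \<rho> * \<beta> - \<alpha>"
  have lam: "lam < 0" using sub by (simp add: lam_def)
  define r0 where "r0 = - lam / (6 * \<beta>)"
  have r0: "r0 > 0" using lam pos unfolding r0_def by (simp add: divide_neg_pos)
  define H where "H = \<bar>\<alpha> - \<gamma> - \<beta>\<bar> + \<beta> * r0"
  define Mc where "Mc = 2 * (H^2 / \<gamma> + \<alpha>^2 / \<eta>) / (- lam) + 1"
  have Mc0: "2 * (H^2 / \<gamma> + \<alpha>^2 / \<eta>) / (- lam) \<ge> 0"
    using lam pos by (intro divide_nonneg_pos mult_nonneg_nonneg add_nonneg_nonneg) auto
  then have Mc: "Mc > 0" by (simp add: Mc_def)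
  have Mclam: "Mc * lam / 2 \<le> - (H^2 / \<gamma> + \<alpha>^2 / \<eta>)"
  proof -
    have "Mc * (- lam) \<ge> (2 * (H^2 / \<gamma> + \<alpha>^2 / \<eta>) / (- lam)) * (- lam)"
      using lam by (intro mult_right_mono) (auto simp: Mc_def)
    also have "(2 * (H^2 / \<gamma> + \<alpha>^2 / \<eta>) / (- lam)) * (- lam) = 2 * (H^2 / \<gamma> + \<alpha>^2 / \<eta>)" using lam by simp
    finally show ?thesis by simp
  qed
  define c0 where "c0 = min (- lam / 4) (min (\<gamma> / 2) (\<eta> / 2))"
  have c0: "c0 > 0" "c0 \<le> - lam / 4" "c0 \<le> \<gamma> / 2" "c0 \<le> \<eta> / 2" using lam pos by (auto simp: c0_def)
  define V where "V = (\<lambda>y::real\<times>real\<times>real. Mc * (fst (snd y))^2 + (fst y + snd (snd y) - 1)^2 + (snd (snd y))^2)"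
  define DV where "DV = (\<lambda>(y::real\<times>real\<times>real) (h::real\<times>real\<times>real). 2 * Mc * fst (snd y) * fst (snd h)
      + 2 * (fst y + snd (snd y) - 1) * (fst h + snd (snd h)) + 2 * snd (snd y) * snd (snd h))"
  have Vd: "(V has_derivative DV y) (at y)" for y
    unfolding V_def DV_def
    by (auto intro!: derivative_eq_intros simp: algebra_simps)
  define m where "m = min (1/3) Mc"
  have m: "m > 0" "m \<le> 1/3" "m \<le> Mc" using Mc by (auto simp: m_def)
  show ?thesis
  proof (rule lyap_las[OF _ r0 Vd, where c = "2 * c0" and m = m and M = "Mc + 3"])
    show "sir_field \<alpha> \<beta> \<gamma> \<eta> \<rho> (1, 0, 0) = 0" by (simp add: sir_field_simp zero_prod_def)
    show "0 < 2 * c0" using c0 by simp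
    show "m > 0" "Mc + 3 > 0" using m Mc by auto
  next
    fix y :: "real \<times> real \<times> real" assume yb: "y \<in> cball (1, 0, 0) r0"
    obtain S I R where y: "y = (S, I, R)" by (cases y) auto
    have dy: "dist (S, I, R) (1, 0, 0) \<le> r0" using yb by (simp add: y dist_commute)
    have dS: "\<bar>S - 1\<bar> \<le> r0" and dI: "\<bar>I\<bar> \<le> r0" and dR: "\<bar>R\<bar> \<le> r0"
      using order_trans[OF dist3_comp(1) dy] order_trans[OF dist3_comp(2) dy] order_trans[OF dist3_comp(3) dy]
      by simp_all
    define u where "u = S + R - 1"
    define g where "g = lam + (\<rho> - 1) * \<beta> * (S - 1) - \<beta> * I - \<beta> * R"
    define h where "h = \<alpha> - \<gamma> - \<beta> - \<beta> * (S - 1)"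
    have g: "g \<le> lam / 2"
    proof -
      have "(\<rho> - 1) * \<beta> * (S - 1) \<le> \<beta> * r0"
      proof -
        have "(\<rho> - 1) * \<beta> * (S - 1) \<le> \<bar>(\<rho> - 1) * \<beta> * (S - 1)\<bar>" by simp
        also have "\<dots> = (1 - \<rho>) * \<beta> * \<bar>S - 1\<bar>" using pos by (simp add: abs_mult)
        also have "\<dots> \<le> 1 * \<beta> * r0" using pos dS by (intro mult_mono) auto
        finally show ?thesis by simp
      qed
      moreover have "\<beta> * (- I) \<le> \<beta> * r0" using dI pos by (intro mult_left_mono) auto
      moreover have "\<beta> * (- R) \<le> \<beta> * r0" using dR pos by (intro mult_left_mono) auto
      moreover have "3 * (\<beta> * r0) = - lam / 2" using pos by (simp add: r0_def)
      ultimately show ?thesis unfolding g_def by simp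
    qed
    have hH: "\<bar>h\<bar> \<le> H"
    proof -
      have "\<bar>h\<bar> \<le> \<bar>\<alpha> - \<gamma> - \<beta>\<bar> + \<bar>\<beta> * (S - 1)\<bar>" unfolding h_def by (rule abs_triangle_ineq4)
      also have "\<bar>\<beta> * (S - 1)\<bar> \<le> \<beta> * r0" using pos dS by (simp add: abs_mult)
      finally show ?thesis by (simp add: H_def)
    qed
    have F: "sir_field \<alpha> \<beta> \<gamma> \<eta> \<rho> y = (- \<beta> * I * S + \<gamma> * (1 - S - I - R) + \<eta> * R, I * g, \<alpha> * I - \<eta> * R)"
      unfolding y sir_field_simp g_def lam_def by (simp add: algebra_simps)
    have SR: "- \<beta> * I * S + \<gamma> * (1 - S - I - R) + \<eta> * R + (\<alpha> * I - \<eta> * R) = - \<gamma> * u + I * h"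
      unfolding u_def h_def by (simp add: algebra_simps)
    have DVF0: "DV y (sir_field \<alpha> \<beta> \<gamma> \<eta> \<rho> y) = 2 * Mc * I * (I * g)
        + 2 * u * (- \<beta> * I * S + \<gamma> * (1 - S - I - R) + \<eta> * R + (\<alpha> * I - \<eta> * R)) + 2 * R * (\<alpha> * I - \<eta> * R)"
      unfolding F unfolding y DV_def u_def by simp
    have DVF: "DV y (sir_field \<alpha> \<beta> \<gamma> \<eta> \<rho> y) = 2 * Mc * I^2 * g + 2 * u * (I * h) - 2 * \<gamma> * u^2 + 2 * R * (\<alpha> * I) - 2 * \<eta> * R^2"
      unfolding DVF0 SR by (simp add: algebra_simps power2_eq_square)
    have t1: "2 * Mc * I^2 * g \<le> Mc * lam * I^2"
    proof -
      have a: "(2 * Mc * I^2) * g \<le> (2 * Mc * I^2) * (lam / 2)" using g Mc by (intro mult_left_mono) auto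
      have b: "(2 * Mc * I^2) * (lam / 2) = Mc * lam * I^2" by simp
      from a b show ?thesis by linarith
    qed
    have t2: "2 * u * (I * h) \<le> \<gamma> * u^2 + H^2 / \<gamma> * I^2"
    proof -
      have "2 * u * (I * h) \<le> 2 * \<bar>u\<bar> * (\<bar>I\<bar> * H)"
      proof -
        have "2 * u * (I * h) \<le> \<bar>2 * u * (I * h)\<bar>" by simp
        also have "\<dots> = 2 * \<bar>u\<bar> * (\<bar>I\<bar> * \<bar>h\<bar>)" by (simp add: abs_mult)
        also have "\<dots> \<le> 2 * \<bar>u\<bar> * (\<bar>I\<bar> * H)" using hH by (intro mult_left_mono) auto
        finally show ?thesis .
      qed
      also have "\<dots> \<le> \<gamma> * \<bar>u\<bar>^2 + (\<bar>I\<bar> * H)^2 / \<gamma>" using young[of \<gamma> "\<bar>u\<bar>" "\<bar>I\<bar> * H"] pos by simp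
      also have "\<dots> = \<gamma> * u^2 + H^2 / \<gamma> * I^2" by (simp add: power_mult_distrib)
      finally show ?thesis .
    qed
    have t3: "2 * R * (\<alpha> * I) \<le> \<eta> * R^2 + \<alpha>^2 / \<eta> * I^2"
    proof -
      have "2 * R * (\<alpha> * I) \<le> \<eta> * R^2 + (\<alpha> * I)^2 / \<eta>" using young[of \<eta> R "\<alpha> * I"] pos by simp
      also have "\<dots> = \<eta> * R^2 + \<alpha>^2 / \<eta> * I^2" by (simp add: power_mult_distrib)
      finally show ?thesis .
    qed
    have "DV y (sir_field \<alpha> \<beta> \<gamma> \<eta> \<rho> y) \<le> (Mc * lam + H^2 / \<gamma> + \<alpha>^2 / \<eta>) * I^2 - \<gamma> * u^2 - \<eta> * R^2"
      unfolding DVF using t1 t2 t3 by (simp add: algebra_simps)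
    also have "\<dots> \<le> (Mc * lam / 2) * I^2 - \<gamma> * u^2 - \<eta> * R^2"
      using Mclam by (intro diff_mono mult_right_mono) auto
    also have "\<dots> \<le> - (2 * c0) * (Mc * I^2 + u^2 + R^2)"
    proof -
      have "2 * c0 * Mc \<le> (- lam / 2) * Mc" using c0 Mc by (intro mult_right_mono) auto
      then have "(Mc * lam / 2) \<le> - (2 * c0) * Mc" by (simp add: algebra_simps)
      then have "(Mc * lam / 2) * I^2 \<le> - (2 * c0) * Mc * I^2" by (intro mult_right_mono) auto
      moreover have "- \<gamma> * u^2 \<le> - (2 * c0) * u^2" using c0 by (intro mult_right_mono) auto
      moreover have "- \<eta> * R^2 \<le> - (2 * c0) * R^2" using c0 by (intro mult_right_mono) auto
      ultimately show ?thesis by (simp add: algebra_simps)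
    qed
    also have "Mc * I^2 + u^2 + R^2 = V y" by (simp add: V_def y u_def)
    finally show "DV y (sir_field \<alpha> \<beta> \<gamma> \<eta> \<rho> y) \<le> - (2 * c0) * V y" .
  next
    fix y :: "real \<times> real \<times> real"
    obtain S I R where y: "y = (S, I, R)" by (cases y) auto
    have d2: "(dist y (1,0,0))^2 = (S - 1)^2 + I^2 + R^2" unfolding y dist3_sq by simp
    define u where "u = S + R - 1"
    have Vy: "V y = Mc * I^2 + u^2 + R^2" by (simp add: V_def y u_def)
    have s1: "(S - 1)^2 \<le> 2 * u^2 + 2 * R^2"
    proof -
      have "2 * u^2 + 2 * R^2 - (S - 1)^2 = (u + R)^2" unfolding u_def by (simp add: power2_eq_square algebra_simps)
      then show ?thesis by (smt (verit) zero_le_power2)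
    qed
    have s2: "u^2 \<le> 2 * (S - 1)^2 + 2 * R^2"
    proof -
      have "2 * (S - 1)^2 + 2 * R^2 - u^2 = (S - 1 - R)^2" unfolding u_def by (simp add: power2_eq_square algebra_simps)
      then show ?thesis by (smt (verit) zero_le_power2)
    qed
    show "m * (dist y (1, 0, 0))^2 \<le> V y"
    proof -
      have "(S - 1)^2 + I^2 + R^2 \<le> 3 * u^2 + 3 * R^2 + I^2" using s1 zero_le_power2[of u] by linarith
      then have "m * (dist y (1, 0, 0))^2 \<le> m * (3 * u^2 + 3 * R^2 + I^2)"
        unfolding d2 using m by (intro mult_left_mono) auto
      also have "\<dots> = (3 * m) * (u^2 + R^2) + m * I^2" by (simp add: algebra_simps)
      also have "\<dots> \<le> 1 * (u^2 + R^2) + Mc * I^2" using m by (intro add_mono mult_right_mono) auto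
      finally show ?thesis unfolding Vy by simp
    qed
    show "V y \<le> (Mc + 3) * (dist y (1, 0, 0))^2"
    proof -
      have "V y \<le> Mc * I^2 + (2 * (S - 1)^2 + 2 * R^2) + R^2" unfolding Vy using s2 by simp
      also have "\<dots> \<le> (Mc + 3) * ((S - 1)^2 + I^2 + R^2)" using Mc by (simp add: algebra_simps)
      finally show ?thesis unfolding d2 .
    qed
  qed
qed

lemma dfe_unstable:
  fixes \<alpha> \<beta> \<gamma> \<eta> \<rho> :: real
  assumes pos: "\<alpha> > 0" "\<beta> > 0" "\<gamma> > 0" "\<eta> > 0" "0 < \<rho>" "\<rho> < 1" and sup: "\<rho> * \<beta> > \<alpha>"
  shows "unstable (sir_field \<alpha> \<beta> \<gamma> \<eta> \<rho>) (1, 0, 0)"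
proof -
  define lam where "lam = \<rho> * \<beta> - \<alpha>"
  have lam: "lam > 0" using sup by (simp add: lam_def)
  define r0 where "r0 = lam / (6 * \<beta>)"
  have r0: "r0 > 0" using lam pos unfolding r0_def by simp
  obtain L where L: "L > 0" and Lip: "\<forall>x\<in>cball (1,0,0) r0. \<forall>y\<in>cball (1,0,0) r0.
      dist (sir_field \<alpha> \<beta> \<gamma> \<eta> \<rho> x) (sir_field \<alpha> \<beta> \<gamma> \<eta> \<rho> y) \<le> L * dist x y"
    using sir_lip by blast
  define W where "W = (\<lambda>y::real\<times>real\<times>real. (fst (snd y))^2)"
  define DW where "DW = (\<lambda>(y::real\<times>real\<times>real) (h::real\<times>real\<times>real). 2 * fst (snd y) * fst (snd h))"
  have Wd: "(W has_derivative DW y) (at y)" for y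
    unfolding W_def DW_def by (auto intro!: derivative_eq_intros)
  show ?thesis
  proof (rule chetaev_unstable[OF _ r0 L Lip Wd lam, where B = "r0^2"])
    show "sir_field \<alpha> \<beta> \<gamma> \<eta> \<rho> (1, 0, 0) = 0" by (simp add: sir_field_simp zero_prod_def)
  next
    fix y :: "real \<times> real \<times> real" assume yb: "y \<in> cball (1, 0, 0) r0"
    obtain S I R where y: "y = (S, I, R)" by (cases y) auto
    have dy: "dist (S, I, R) (1, 0, 0) \<le> r0" using yb by (simp add: y dist_commute)
    have dS: "\<bar>S - 1\<bar> \<le> r0" and dI: "\<bar>I\<bar> \<le> r0" and dR: "\<bar>R\<bar> \<le> r0"
      using order_trans[OF dist3_comp(1) dy] order_trans[OF dist3_comp(2) dy] order_trans[OF dist3_comp(3) dy]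
      by simp_all
    define g where "g = lam + (\<rho> - 1) * \<beta> * (S - 1) - \<beta> * I - \<beta> * R"
    have g: "g \<ge> lam / 2"
    proof -
      have "(\<rho> - 1) * \<beta> * (S - 1) \<ge> - (\<beta> * r0)"
      proof -
        have "- ((\<rho> - 1) * \<beta> * (S - 1)) \<le> \<bar>(\<rho> - 1) * \<beta> * (S - 1)\<bar>" by simp
        also have "\<dots> = (1 - \<rho>) * \<beta> * \<bar>S - 1\<bar>" using pos by (simp add: abs_mult)
        also have "\<dots> \<le> 1 * \<beta> * r0" using pos dS by (intro mult_mono) auto
        finally show ?thesis by simp
      qed
      moreover have "\<beta> * I \<le> \<beta> * r0" using dI pos by (intro mult_left_mono) auto
      moreover have "\<beta> * R \<le> \<beta> * r0" using dR pos by (intro mult_left_mono) auto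
      moreover have "3 * (\<beta> * r0) = lam / 2" using pos by (simp add: r0_def)
      ultimately show ?thesis unfolding g_def by simp
    qed
    have F: "sir_field \<alpha> \<beta> \<gamma> \<eta> \<rho> y = (- \<beta> * I * S + \<gamma> * (1 - S - I - R) + \<eta> * R, I * g, \<alpha> * I - \<eta> * R)"
      unfolding y sir_field_simp g_def lam_def by (simp add: algebra_simps)
    have "DW y (sir_field \<alpha> \<beta> \<gamma> \<eta> \<rho> y) = (2 * I^2) * g" unfolding F unfolding DW_def y by (simp add: power2_eq_square)
    also have "\<dots> \<ge> (2 * I^2) * (lam / 2)" using g by (intro mult_left_mono) auto
    finally show "DW y (sir_field \<alpha> \<beta> \<gamma> \<eta> \<rho> y) \<ge> lam * W y" by (simp add: W_def y mult.commute)
  next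
    fix y :: "real \<times> real \<times> real" assume yb: "y \<in> cball (1, 0, 0) r0"
    obtain S I R where y: "y = (S, I, R)" by (cases y) auto
    have dy: "dist (S, I, R) (1, 0, 0) \<le> r0" using yb by (simp add: y dist_commute)
    have dI: "\<bar>I\<bar> \<le> r0" using order_trans[OF dist3_comp(2) dy] by simp
    show "W y \<le> r0^2" unfolding W_def y using dI by (simp add: abs_le_square_iff[symmetric] power_mono)
  next
    fix \<delta> :: real assume d: "\<delta> > 0"
    show "\<exists>y. dist y (1, 0, 0) < \<delta> \<and> W y > 0"
      by (rule exI[of _ "(1, \<delta>/2, 0)"]) (use d in \<open>simp add: W_def dist3\<close>)
  qed
qed

lemma em_identity:
  fixes S I R Ss Is Rs \<alpha> \<beta> \<gamma> \<eta> \<rho> a0 c0 b0 K M \<sigma> e1 :: real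
  assumes eqR: "\<eta> * Rs = \<alpha> * Is"
    and eqG: "\<rho> * \<beta> * Ss - \<alpha> + \<beta> * (1 - Ss - Is - Rs) = 0"
    and eqU: "- \<beta> * Is * Ss + \<gamma> * (1 - Ss - Is - Rs) + \<alpha> * Is = 0"
    and ha0: "\<gamma> * a0 = \<alpha> - \<gamma> - b0" and hc0: "\<eta> * c0 = \<alpha>" and hM: "M * Is = K"
    and hs: "\<sigma> = - (1 - \<rho>) * \<beta> * a0 - \<rho> * \<beta> * c0 - \<beta>" and he: "e1 = b0 - \<beta> * Ss"
  shows "M * (I - Is) * (I * (\<rho> * \<beta> * S - \<alpha> + \<beta> * (1 - S - I - R)))
     - ((S - Ss + R - Rs) - a0 * (I - Is)) * ((- \<beta> * I * S + \<gamma> * (1 - S - I - R) + \<eta> * R) + (\<alpha> * I - \<eta> * R) - a0 * (I * (\<rho> * \<beta> * S - \<alpha> + \<beta> * (1 - S - I - R))))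
     - ((R - Rs) - c0 * (I - Is)) * ((\<alpha> * I - \<eta> * R) - c0 * (I * (\<rho> * \<beta> * S - \<alpha> + \<beta> * (1 - S - I - R))))
   = (let i = I - Is; p = (S - Ss + R - Rs) - a0 * (I - Is); q = (R - Rs) - c0 * (I - Is) in
      (let s = p + (a0 - c0) * i - q; G = \<sigma> * i - (1 - \<rho>) * \<beta> * p - \<rho> * \<beta> * q
      in K * i * G + \<gamma> * p^2 - e1 * p * i + Is * (\<beta> * p * s + a0 * p * G) + \<eta> * q^2 + c0 * Is * q * G
         + (M * i^2 * G + \<beta> * p * i * s + a0 * p * i * G + c0 * q * i * G)))"
  unfolding Let_def using assms by algebra

lemma quad_pair:
  fixes A B k x y :: real
  assumes "A \<ge> 0" "B \<ge> 0" "k^2 \<le> A * B"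
  shows "0 \<le> A * x^2 + B * y^2 + 2 * k * x * y"
proof (cases "A = 0")
  case True
  then have "k^2 \<le> 0" using assms by simp
  then have "k = 0" by simp
  then show ?thesis using True assms by simp
next
  case False
  then have A: "A > 0" using assms by simp
  have "A * (A * x^2 + B * y^2 + 2 * k * x * y) = (A * x + k * y)^2 + (A * B - k^2) * y^2"
    by (simp add: power2_eq_square algebra_simps)
  also have "\<dots> \<ge> 0" using assms by simp
  finally show ?thesis using A by (simp add: zero_le_mult_iff)
qed

lemma N_sq: "(\<bar>p\<bar> + \<bar>i\<bar> + \<bar>q\<bar>)^2 \<le> 3 * ((p::real)^2 + i^2 + q^2)"
proof -
  have "3 * (p^2 + i^2 + q^2) - (\<bar>p\<bar> + \<bar>i\<bar> + \<bar>q\<bar>)^2 = (\<bar>p\<bar> - \<bar>i\<bar>)^2 + (\<bar>p\<bar> - \<bar>q\<bar>)^2 + (\<bar>i\<bar> - \<bar>q\<bar>)^2"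
    by (simp add: power2_eq_square algebra_simps)
  moreover have "(\<bar>p\<bar> - \<bar>i\<bar>)^2 + (\<bar>p\<bar> - \<bar>q\<bar>)^2 + (\<bar>i\<bar> - \<bar>q\<bar>)^2 \<ge> 0" by simp
  ultimately show ?thesis by linarith
qed

lemma xN_le:
  fixes x N Sg :: real
  assumes "x^2 \<le> Sg" "N^2 \<le> 3 * Sg"
  shows "\<bar>x\<bar> * \<bar>N\<bar> \<le> 2 * Sg"
proof -
  have "2 * (\<bar>x\<bar> * \<bar>N\<bar>) \<le> \<bar>x\<bar>^2 + \<bar>N\<bar>^2" using sum_squares_bound[of "\<bar>x\<bar>" "\<bar>N\<bar>"]
    by (simp add: power2_eq_square algebra_simps)
  then show ?thesis using assms by simp
qed

lemma chet_ineq: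
  fixes p i q K \<sigma> \<gamma> \<eta> \<beta> \<rho> e1 Is a0 c0 M \<nu> :: real
  assumes pos: "K > 0" "\<sigma> > 0" "\<gamma> > 0" "\<eta> > 0" "\<beta> > 0" "0 < \<rho>" "\<rho> < 1" "Is > 0" "c0 \<ge> 0" "M \<ge> 0"
    and K1: "K * ((1 - \<rho>) * \<beta>)^2 \<le> \<sigma> * \<gamma> / 2" and K2: "K * (\<rho> * \<beta>)^2 \<le> \<sigma> * \<eta> / 2"
    and Nn: "\<bar>p\<bar> + \<bar>i\<bar> + \<bar>q\<bar> \<le> \<nu>"
  shows "(let s = p + (a0 - c0) * i - q; G = \<sigma> * i - (1 - \<rho>) * \<beta> * p - \<rho> * \<beta> * q
      in K * i * G + \<gamma> * p^2 - e1 * p * i + Is * (\<beta> * p * s + a0 * p * G) + \<eta> * q^2 + c0 * Is * q * G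
         + (M * i^2 * G + \<beta> * p * i * s + a0 * p * i * G + c0 * q * i * G))
    \<ge> (min (K * \<sigma> / 4) (min (\<gamma> / 2) (\<eta> / 2)) - \<bar>e1\<bar> / 2
        - Is * (2 * (\<beta> * (1 + \<bar>a0 - c0\<bar>) + (\<bar>a0\<bar> + c0) * (\<sigma> + \<beta>)))
        - 3 * \<nu> * (M * (\<sigma> + \<beta>) + \<beta> * (1 + \<bar>a0 - c0\<bar>) + (\<bar>a0\<bar> + c0) * (\<sigma> + \<beta>))) * (p^2 + i^2 + q^2)"
proof -
  define s where "s = p + (a0 - c0) * i - q"
  define G where "G = \<sigma> * i - (1 - \<rho>) * \<beta> * p - \<rho> * \<beta> * q"
  define Sg where "Sg = p^2 + i^2 + q^2"
  define N where "N = \<bar>p\<bar> + \<bar>i\<bar> + \<bar>q\<bar>"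
  define gs where "gs = 1 + \<bar>a0 - c0\<bar>"
  define gG where "gG = \<sigma> + \<beta>"
  define m0 where "m0 = min (K * \<sigma> / 4) (min (\<gamma> / 2) (\<eta> / 2))"
  have Sg0: "Sg \<ge> 0" by (simp add: Sg_def)
  have N0: "N \<ge> 0" by (simp add: N_def)
  have gs0: "gs \<ge> 0" by (simp add: gs_def)
  have gG0: "gG \<ge> 0" using pos by (simp add: gG_def)
  have NS: "N^2 \<le> 3 * Sg" unfolding N_def Sg_def by (rule N_sq)
  have pN: "\<bar>p\<bar> * N \<le> 2 * Sg" using xN_le[of p Sg N] NS N0 by (simp add: Sg_def)
  have iN: "\<bar>i\<bar> * N \<le> 2 * Sg" using xN_le[of i Sg N] NS N0 by (simp add: Sg_def)
  have qN: "\<bar>q\<bar> * N \<le> 2 * Sg" using xN_le[of q Sg N] NS N0 by (simp add: Sg_def)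
  have pi: "\<bar>p * i\<bar> \<le> Sg / 2"
  proof -
    have "2 * (\<bar>p\<bar> * \<bar>i\<bar>) \<le> \<bar>p\<bar>^2 + \<bar>i\<bar>^2" using sum_squares_bound[of "\<bar>p\<bar>" "\<bar>i\<bar>"]
      by (simp add: power2_eq_square algebra_simps)
    then have "\<bar>p * i\<bar> \<le> (p^2 + i^2) / 2" by (simp add: abs_mult)
    also have "\<dots> \<le> (p^2 + i^2 + q^2) / 2" by (simp add: divide_right_mono)
    finally show ?thesis unfolding Sg_def .
  qed
  have sN: "\<bar>s\<bar> \<le> gs * N"
  proof -
    have "\<bar>s\<bar> \<le> \<bar>p\<bar> + \<bar>(a0 - c0) * i\<bar> + \<bar>q\<bar>" unfolding s_def by (rule order_trans[OF abs_triangle_ineq4 add_mono[OF abs_triangle_ineq order_refl]])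
    also have "\<dots> = \<bar>p\<bar> + \<bar>a0 - c0\<bar> * \<bar>i\<bar> + \<bar>q\<bar>" by (simp add: abs_mult)
    also have "\<dots> \<le> gs * N" unfolding gs_def N_def by (simp add: algebra_simps mult_left_mono)
    finally show ?thesis .
  qed
  have GN: "\<bar>G\<bar> \<le> gG * N"
  proof -
    have "\<bar>G\<bar> \<le> \<bar>\<sigma> * i\<bar> + \<bar>(1 - \<rho>) * \<beta> * p\<bar> + \<bar>\<rho> * \<beta> * q\<bar>" unfolding G_def
      by (rule order_trans[OF abs_triangle_ineq4 add_mono[OF abs_triangle_ineq4 order_refl]])
    also have "\<dots> = \<sigma> * \<bar>i\<bar> + ((1 - \<rho>) * \<beta>) * \<bar>p\<bar> + (\<rho> * \<beta>) * \<bar>q\<bar>" using pos by (simp add: abs_mult)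
    also have "\<dots> \<le> \<sigma> * \<bar>i\<bar> + \<beta> * \<bar>p\<bar> + \<beta> * \<bar>q\<bar>"
      using pos by (intro add_mono mult_right_mono) auto
    also have "\<dots> \<le> gG * N" unfolding gG_def N_def using pos by (simp add: algebra_simps)
    finally show ?thesis .
  qed
  have main: "K * i * G + \<gamma> * p^2 + \<eta> * q^2 \<ge> m0 * Sg"
  proof -
    have KiG: "K * i * G = K * \<sigma> * i^2 - K * (1 - \<rho>) * \<beta> * i * p - K * \<rho> * \<beta> * i * q"
      unfolding G_def by (simp add: power2_eq_square algebra_simps)
    have P1: "0 \<le> (K * \<sigma> / 4) * i^2 + (\<gamma> / 2) * p^2 + 2 * (- K * (1 - \<rho>) * \<beta> / 2) * i * p"
    proof (rule quad_pair)
      show "0 \<le> K * \<sigma> / 4" "0 \<le> \<gamma> / 2" using pos by auto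
      have "(- K * (1 - \<rho>) * \<beta> / 2)^2 = K * (K * ((1 - \<rho>) * \<beta>)^2) / 4" by (simp add: power2_eq_square)
      also have "\<dots> \<le> K * (\<sigma> * \<gamma> / 2) / 4" using K1 pos by (intro divide_right_mono mult_left_mono) auto
      also have "\<dots> = K * \<sigma> / 4 * (\<gamma> / 2)" by simp
      finally show "(- K * (1 - \<rho>) * \<beta> / 2)^2 \<le> K * \<sigma> / 4 * (\<gamma> / 2)" .
    qed
    have P2: "0 \<le> (K * \<sigma> / 4) * i^2 + (\<eta> / 2) * q^2 + 2 * (- K * \<rho> * \<beta> / 2) * i * q"
    proof (rule quad_pair)
      show "0 \<le> K * \<sigma> / 4" "0 \<le> \<eta> / 2" using pos by auto
      have "(- K * \<rho> * \<beta> / 2)^2 = K * (K * (\<rho> * \<beta>)^2) / 4" by (simp add: power2_eq_square)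
      also have "\<dots> \<le> K * (\<sigma> * \<eta> / 2) / 4" using K2 pos by (intro divide_right_mono mult_left_mono) auto
      also have "\<dots> = K * \<sigma> / 4 * (\<eta> / 2)" by simp
      finally show "(- K * \<rho> * \<beta> / 2)^2 \<le> K * \<sigma> / 4 * (\<eta> / 2)" .
    qed
    have "K * i * G + \<gamma> * p^2 + \<eta> * q^2 - ((K * \<sigma> / 2) * i^2 + (\<gamma> / 2) * p^2 + (\<eta> / 2) * q^2)
        = ((K * \<sigma> / 4) * i^2 + (\<gamma> / 2) * p^2 + 2 * (- K * (1 - \<rho>) * \<beta> / 2) * i * p)
        + ((K * \<sigma> / 4) * i^2 + (\<eta> / 2) * q^2 + 2 * (- K * \<rho> * \<beta> / 2) * i * q)"
      unfolding KiG by (simp add: field_simps)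
    then have "K * i * G + \<gamma> * p^2 + \<eta> * q^2 \<ge> (K * \<sigma> / 2) * i^2 + (\<gamma> / 2) * p^2 + (\<eta> / 2) * q^2"
      using P1 P2 by linarith
    moreover have "(K * \<sigma> / 2) * i^2 \<ge> m0 * i^2"
    proof (intro mult_right_mono)
      have "K * \<sigma> > 0" using pos by simp
      moreover have "m0 \<le> K * \<sigma> / 4" by (simp add: m0_def)
      ultimately show "m0 \<le> K * \<sigma> / 2" by linarith
    qed simp
    moreover have "(\<gamma> / 2) * p^2 \<ge> m0 * p^2" unfolding m0_def by (intro mult_right_mono) auto
    moreover have "(\<eta> / 2) * q^2 \<ge> m0 * q^2" unfolding m0_def by (intro mult_right_mono) auto
    moreover have "m0 * Sg = m0 * p^2 + m0 * i^2 + m0 * q^2" by (simp add: Sg_def algebra_simps)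
    ultimately show ?thesis by linarith
  qed
  have E1: "- e1 * p * i \<ge> - (\<bar>e1\<bar> / 2 * Sg)"
  proof -
    have "\<bar>e1 * p * i\<bar> = \<bar>e1\<bar> * \<bar>p * i\<bar>" by (simp add: abs_mult)
    also have "\<dots> \<le> \<bar>e1\<bar> * (Sg / 2)" using pi by (intro mult_left_mono) auto
    finally have "e1 * p * i \<le> \<bar>e1\<bar> * (Sg / 2)" by (rule abs_le_D1)
    then show ?thesis by simp
  qed
  have bnd: "\<bar>c * x * y\<bar> \<le> \<bar>c\<bar> * g * (2 * Sg)" if "\<bar>y\<bar> \<le> g * N" "\<bar>x\<bar> * N \<le> 2 * Sg" "g \<ge> 0" for c x y g
  proof -
    have "\<bar>c * x * y\<bar> = \<bar>c\<bar> * (\<bar>x\<bar> * \<bar>y\<bar>)" by (simp add: abs_mult)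
    also have "\<dots> \<le> \<bar>c\<bar> * (\<bar>x\<bar> * (g * N))" using that by (intro mult_left_mono) auto
    also have "\<dots> = \<bar>c\<bar> * g * (\<bar>x\<bar> * N)" by (simp add: algebra_simps)
    also have "\<dots> \<le> \<bar>c\<bar> * g * (2 * Sg)" using that by (intro mult_left_mono) auto
    finally show ?thesis .
  qed
  have E2: "\<bar>\<beta> * p * s\<bar> \<le> \<beta> * gs * (2 * Sg)" using bnd[OF sN pN gs0, of \<beta>] pos by simp
  have E3: "\<bar>a0 * p * G\<bar> \<le> \<bar>a0\<bar> * gG * (2 * Sg)" using bnd[OF GN pN gG0, of a0] by simp
  have E4: "\<bar>c0 * q * G\<bar> \<le> c0 * gG * (2 * Sg)" using bnd[OF GN qN gG0, of c0] pos by simp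
  have E: "Is * (\<beta> * p * s + a0 * p * G) + c0 * Is * q * G \<ge> - (Is * (2 * (\<beta> * gs + (\<bar>a0\<bar> + c0) * gG)) * Sg)"
  proof -
    have "\<bar>\<beta> * p * s + a0 * p * G + c0 * q * G\<bar> \<le> \<beta> * gs * (2 * Sg) + \<bar>a0\<bar> * gG * (2 * Sg) + c0 * gG * (2 * Sg)"
      using E2 E3 E4 abs3[of "\<beta> * p * s" "a0 * p * G" "c0 * q * G"] by linarith
    also have "\<dots> = 2 * (\<beta> * gs + (\<bar>a0\<bar> + c0) * gG) * Sg" by (simp add: algebra_simps)
    finally have h: "\<bar>\<beta> * p * s + a0 * p * G + c0 * q * G\<bar> \<le> 2 * (\<beta> * gs + (\<bar>a0\<bar> + c0) * gG) * Sg" .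
    have "Is * (\<beta> * p * s + a0 * p * G) + c0 * Is * q * G = Is * (\<beta> * p * s + a0 * p * G + c0 * q * G)"
      by (simp add: algebra_simps)
    also have "\<dots> \<ge> - (Is * (2 * (\<beta> * gs + (\<bar>a0\<bar> + c0) * gG) * Sg))"
    proof -
      have "\<bar>Is * (\<beta> * p * s + a0 * p * G + c0 * q * G)\<bar> \<le> Is * (2 * (\<beta> * gs + (\<bar>a0\<bar> + c0) * gG) * Sg)"
        using h pos by (simp add: abs_mult mult_left_mono)
      then show ?thesis by (rule abs_le_D2[THEN minus_le_iff[THEN iffD1]])
    qed
    finally show ?thesis by (simp add: algebra_simps)
  qed
  have N3: "N^3 \<le> 3 * \<nu> * Sg"
  proof -
    have "N^3 = N * N^2" by (simp add: power3_eq_cube power2_eq_square)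
    also have "\<dots> \<le> \<nu> * (3 * Sg)" using Nn N0 NS unfolding N_def by (intro mult_mono) auto
    finally show ?thesis by simp
  qed
  have C: "M * i^2 * G + \<beta> * p * i * s + a0 * p * i * G + c0 * q * i * G
      \<ge> - (3 * \<nu> * (M * gG + \<beta> * gs + (\<bar>a0\<bar> + c0) * gG) * Sg)"
  proof -
    have ai: "\<bar>i\<bar> \<le> N" "\<bar>p\<bar> \<le> N" "\<bar>q\<bar> \<le> N" by (auto simp: N_def)
    have t: "\<bar>c * x * y * z\<bar> \<le> \<bar>c\<bar> * g * N^3" if "\<bar>x\<bar> \<le> N" "\<bar>y\<bar> \<le> N" "\<bar>z\<bar> \<le> g * N" "g \<ge> 0" for c x y z g
    proof -
      have "\<bar>c * x * y * z\<bar> = \<bar>c\<bar> * (\<bar>x\<bar> * \<bar>y\<bar> * \<bar>z\<bar>)" by (simp add: abs_mult)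
      also have "\<dots> \<le> \<bar>c\<bar> * (N * N * (g * N))" using that N0 by (intro mult_left_mono mult_mono) auto
      also have "\<dots> = \<bar>c\<bar> * g * N^3" by (simp add: power3_eq_cube algebra_simps)
      finally show ?thesis .
    qed
    have c1: "\<bar>M * i * i * G\<bar> \<le> M * gG * N^3" using t[OF ai(1) ai(1) GN gG0, of M] pos by simp
    have c2: "\<bar>\<beta> * p * i * s\<bar> \<le> \<beta> * gs * N^3" using t[OF ai(2) ai(1) sN gs0, of \<beta>] pos by simp
    have c3: "\<bar>a0 * p * i * G\<bar> \<le> \<bar>a0\<bar> * gG * N^3" using t[OF ai(2) ai(1) GN gG0, of a0] by simp
    have c4: "\<bar>c0 * q * i * G\<bar> \<le> c0 * gG * N^3" using t[OF ai(3) ai(1) GN gG0, of c0] pos by simp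
    have "\<bar>M * i^2 * G + \<beta> * p * i * s + a0 * p * i * G + c0 * q * i * G\<bar>
        \<le> \<bar>M * i * i * G\<bar> + \<bar>\<beta> * p * i * s\<bar> + \<bar>a0 * p * i * G\<bar> + \<bar>c0 * q * i * G\<bar>"
      unfolding power2_eq_square mult.assoc
      by (rule order_trans[OF abs_triangle_ineq add_mono[OF abs3 order_refl]])
    also have "\<dots> \<le> (M * gG + \<beta> * gs + (\<bar>a0\<bar> + c0) * gG) * N^3"
      using c1 c2 c3 c4 by (simp add: algebra_simps)
    also have "\<dots> \<le> (M * gG + \<beta> * gs + (\<bar>a0\<bar> + c0) * gG) * (3 * \<nu> * Sg)"
      using N3 pos gs0 gG0 by (intro mult_left_mono) auto
    finally have "\<bar>M * i^2 * G + \<beta> * p * i * s + a0 * p * i * G + c0 * q * i * G\<bar>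
        \<le> 3 * \<nu> * (M * gG + \<beta> * gs + (\<bar>a0\<bar> + c0) * gG) * Sg" by (simp add: algebra_simps)
    then show ?thesis by (rule abs_le_D2[THEN minus_le_iff[THEN iffD1]])
  qed
  have fin: "(m0 - \<bar>e1\<bar> / 2 - Is * (2 * (\<beta> * gs + (\<bar>a0\<bar> + c0) * gG)) - 3 * \<nu> * (M * gG + \<beta> * gs + (\<bar>a0\<bar> + c0) * gG)) * Sg
     = m0 * Sg - \<bar>e1\<bar> / 2 * Sg - Is * (2 * (\<beta> * gs + (\<bar>a0\<bar> + c0) * gG)) * Sg - 3 * \<nu> * (M * gG + \<beta> * gs + (\<bar>a0\<bar> + c0) * gG) * Sg"
    by (simp add: algebra_simps)
  show ?thesis
    unfolding Let_def s_def[symmetric] G_def[symmetric]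
    using main E1 E C fin unfolding m0_def gs_def gG_def Sg_def by linarith
qed

lemma em_unstable_core:
  fixes \<alpha> \<beta> \<gamma> \<eta> \<rho> Ss Is Rs a0 c0 \<sigma> e1 K :: real
  assumes pos: "\<alpha> > 0" "\<beta> > 0" "\<gamma> > 0" "\<eta> > 0" "0 < \<rho>" "\<rho> < 1" "Is > 0"
    and eqR: "\<eta> * Rs = \<alpha> * Is"
    and eqG: "\<rho> * \<beta> * Ss - \<alpha> + \<beta> * (1 - Ss - Is - Rs) = 0"
    and eqU: "- \<beta> * Is * Ss + \<gamma> * (1 - Ss - Is - Rs) + \<alpha> * Is = 0"
    and a0: "a0 = (\<alpha> - \<gamma> - \<alpha> / \<rho>) / \<gamma>" and c0: "c0 = \<alpha> / \<eta>"
    and sg: "\<sigma> = - (1 - \<rho>) * \<beta> * a0 - \<rho> * \<beta> * c0 - \<beta>" and e1: "e1 = \<alpha> / \<rho> - \<beta> * Ss"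
    and K: "K = \<sigma> * min (\<gamma> / (2 * ((1 - \<rho>) * \<beta>)^2)) (\<eta> / (2 * (\<rho> * \<beta>)^2))"
    and sgp: "\<sigma> > 0"
    and small: "\<bar>e1\<bar> / 2 + Is * (2 * (\<beta> * (1 + \<bar>a0 - c0\<bar>) + (\<bar>a0\<bar> + c0) * (\<sigma> + \<beta>)))
                  < min (K * \<sigma> / 4) (min (\<gamma> / 2) (\<eta> / 2))"
  shows "unstable (sir_field \<alpha> \<beta> \<gamma> \<eta> \<rho>) (Ss, Is, Rs)"
proof -
  define e where "e = (Ss, Is, Rs)"
  have c0p: "c0 \<ge> 0" using pos by (simp add: c0)
  have Kp: "K > 0" unfolding K using sgp pos by simp
  have K1: "K * ((1 - \<rho>) * \<beta>)^2 \<le> \<sigma> * \<gamma> / 2"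
  proof -
    have "K \<le> \<sigma> * (\<gamma> / (2 * ((1 - \<rho>) * \<beta>)^2))" unfolding K using sgp by (intro mult_left_mono) auto
    then have "K * ((1 - \<rho>) * \<beta>)^2 \<le> \<sigma> * (\<gamma> / (2 * ((1 - \<rho>) * \<beta>)^2)) * ((1 - \<rho>) * \<beta>)^2"
      by (intro mult_right_mono) auto
    also have "\<dots> = \<sigma> * \<gamma> / 2" using pos by (simp add: field_simps)
    finally show ?thesis .
  qed
  have K2: "K * (\<rho> * \<beta>)^2 \<le> \<sigma> * \<eta> / 2"
  proof -
    have "K \<le> \<sigma> * (\<eta> / (2 * (\<rho> * \<beta>)^2))" unfolding K using sgp by (intro mult_left_mono) auto
    then have "K * (\<rho> * \<beta>)^2 \<le> \<sigma> * (\<eta> / (2 * (\<rho> * \<beta>)^2)) * (\<rho> * \<beta>)^2"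
      by (intro mult_right_mono) auto
    also have "\<dots> = \<sigma> * \<eta> / 2" using pos by (simp add: field_simps)
    finally show ?thesis .
  qed
  define M where "M = K / Is"
  have Mp: "M > 0" using Kp pos by (simp add: M_def)
  have hM: "M * Is = K" using pos by (simp add: M_def)
  define CE where "CE = 2 * (\<beta> * (1 + \<bar>a0 - c0\<bar>) + (\<bar>a0\<bar> + c0) * (\<sigma> + \<beta>))"
  define m1 where "m1 = min (K * \<sigma> / 4) (min (\<gamma> / 2) (\<eta> / 2)) - \<bar>e1\<bar> / 2 - Is * CE"
  have m1: "m1 > 0" using small unfolding m1_def CE_def by linarith
  define C3 where "C3 = M * (\<sigma> + \<beta>) + \<beta> * (1 + \<bar>a0 - c0\<bar>) + (\<bar>a0\<bar> + c0) * (\<sigma> + \<beta>)"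
  have C3: "C3 \<ge> 0" using Mp pos sgp c0p by (simp add: C3_def)
  define \<nu> where "\<nu> = m1 / (6 * (C3 + 1))"
  have \<nu>: "\<nu> > 0" using m1 C3 by (simp add: \<nu>_def)
  have \<nu>C: "3 * \<nu> * C3 \<le> m1 / 2"
  proof -
    have "3 * \<nu> * C3 = (m1 / 2) * (C3 / (C3 + 1))" using C3 by (simp add: \<nu>_def field_simps)
    also have "\<dots> \<le> (m1 / 2) * 1" using m1 C3 by (intro mult_left_mono) auto
    finally show ?thesis by simp
  qed
  define c1 where "c1 = m1 / 2"
  have c1: "c1 > 0" using m1 by (simp add: c1_def)
  define r0 where "r0 = \<nu> / (4 + \<bar>a0\<bar> + c0)"
  have r0: "r0 > 0" using \<nu> c0p by (simp add: r0_def add_pos_nonneg)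
  obtain L where L: "L > 0" and Lip: "\<forall>x\<in>cball e r0. \<forall>y\<in>cball e r0.
      dist (sir_field \<alpha> \<beta> \<gamma> \<eta> \<rho> x) (sir_field \<alpha> \<beta> \<gamma> \<eta> \<rho> y) \<le> L * dist x y"
    using sir_lip by blast
  define Pf where "Pf = (\<lambda>y::real\<times>real\<times>real. (fst y - Ss + snd (snd y) - Rs) - a0 * (fst (snd y) - Is))"
  define Qf where "Qf = (\<lambda>y::real\<times>real\<times>real. (snd (snd y) - Rs) - c0 * (fst (snd y) - Is))"
  define W where "W = (\<lambda>y::real\<times>real\<times>real. M * (fst (snd y) - Is)^2 - (Pf y)^2 - (Qf y)^2)"
  define DW where "DW = (\<lambda>(y::real\<times>real\<times>real) (h::real\<times>real\<times>real). 2 * M * (fst (snd y) - Is) * fst (snd h)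
      - 2 * Pf y * (fst h + snd (snd h) - a0 * fst (snd h)) - 2 * Qf y * (snd (snd h) - c0 * fst (snd h)))"
  have Wd: "(W has_derivative DW y) (at y)" for y
    unfolding W_def DW_def Pf_def Qf_def
    by (auto intro!: derivative_eq_intros simp: algebra_simps)
  define cW where "cW = 2 * c1 / M"
  have cW: "cW > 0" using c1 Mp by (simp add: cW_def)
  show ?thesis unfolding e_def[symmetric]
  proof (rule chetaev_unstable[OF _ r0 L Lip Wd cW, where B = "M * r0^2"])
    show "sir_field \<alpha> \<beta> \<gamma> \<eta> \<rho> e = 0"
    proof -
      have "\<eta> * Rs - \<alpha> * Is = 0" using eqR by simp
      moreover have "\<rho> * \<beta> * Is * Ss - \<alpha> * Is + \<beta> * Is * (1 - Ss - Is - Rs) = Is * (\<rho> * \<beta> * Ss - \<alpha> + \<beta> * (1 - Ss - Is - Rs))"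
        by (simp add: algebra_simps)
      moreover have "- \<beta> * Is * Ss + \<gamma> * (1 - Ss - Is - Rs) + \<eta> * Rs = - \<beta> * Is * Ss + \<gamma> * (1 - Ss - Is - Rs) + \<alpha> * Is"
        using eqR by simp
      ultimately show ?thesis unfolding e_def sir_field_simp using eqG eqU by (simp add: zero_prod_def)
    qed
  next
    fix y :: "real \<times> real \<times> real" assume yb: "y \<in> cball e r0"
    obtain S I R where y: "y = (S, I, R)" by (cases y) auto
    have dy: "dist (S, I, R) (Ss, Is, Rs) \<le> r0" using yb by (simp add: y e_def dist_commute)
    have dS: "\<bar>S - Ss\<bar> \<le> r0" and dI: "\<bar>I - Is\<bar> \<le> r0" and dR: "\<bar>R - Rs\<bar> \<le> r0"
      using order_trans[OF dist3_comp(1) dy] order_trans[OF dist3_comp(2) dy] order_trans[OF dist3_comp(3) dy]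
      by simp_all
    define p where "p = (S - Ss + R - Rs) - a0 * (I - Is)"
    define q where "q = (R - Rs) - c0 * (I - Is)"
    define i where "i = I - Is"
    have Np: "\<bar>p\<bar> + \<bar>i\<bar> + \<bar>q\<bar> \<le> \<nu>"
    proof -
      have "p = (S - Ss) + (R - Rs) + (- a0 * (I - Is))" unfolding p_def by simp
      then have "\<bar>p\<bar> \<le> \<bar>S - Ss\<bar> + \<bar>R - Rs\<bar> + \<bar>- a0 * (I - Is)\<bar>" using abs3 by metis
      also have "\<bar>- a0 * (I - Is)\<bar> = \<bar>a0\<bar> * \<bar>I - Is\<bar>" by (simp add: abs_mult)
      finally have "\<bar>p\<bar> \<le> \<bar>S - Ss\<bar> + \<bar>R - Rs\<bar> + \<bar>a0\<bar> * \<bar>I - Is\<bar>" .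
      also have "\<dots> \<le> r0 + r0 + \<bar>a0\<bar> * r0" using dS dR dI by (intro add_mono mult_left_mono) auto
      finally have pb: "\<bar>p\<bar> \<le> (2 + \<bar>a0\<bar>) * r0" by (simp add: algebra_simps)
      have "\<bar>q\<bar> \<le> \<bar>R - Rs\<bar> + \<bar>c0 * (I - Is)\<bar>" unfolding q_def by (rule abs_triangle_ineq4)
      also have "\<bar>c0 * (I - Is)\<bar> = c0 * \<bar>I - Is\<bar>" using c0p by (simp add: abs_mult)
      finally have "\<bar>q\<bar> \<le> \<bar>R - Rs\<bar> + c0 * \<bar>I - Is\<bar>" .
      also have "\<dots> \<le> r0 + c0 * r0" using dR dI c0p by (intro add_mono mult_left_mono) auto
      finally have qb: "\<bar>q\<bar> \<le> (1 + c0) * r0" by (simp add: algebra_simps)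
      have "\<bar>p\<bar> + \<bar>i\<bar> + \<bar>q\<bar> \<le> (2 + \<bar>a0\<bar>) * r0 + r0 + (1 + c0) * r0" using pb qb dI by (simp add: i_def)
      also have "\<dots> = (4 + \<bar>a0\<bar> + c0) * r0" by (simp add: algebra_simps)
      also have "\<dots> = \<nu>" unfolding r0_def using c0p by (simp add: add_pos_nonneg)
      finally show ?thesis .
    qed
    have ineq: "(let s = p + (a0 - c0) * i - q; G = \<sigma> * i - (1 - \<rho>) * \<beta> * p - \<rho> * \<beta> * q
      in K * i * G + \<gamma> * p^2 - e1 * p * i + Is * (\<beta> * p * s + a0 * p * G) + \<eta> * q^2 + c0 * Is * q * G
         + (M * i^2 * G + \<beta> * p * i * s + a0 * p * i * G + c0 * q * i * G))
      \<ge> (min (K * \<sigma> / 4) (min (\<gamma> / 2) (\<eta> / 2)) - \<bar>e1\<bar> / 2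
        - Is * (2 * (\<beta> * (1 + \<bar>a0 - c0\<bar>) + (\<bar>a0\<bar> + c0) * (\<sigma> + \<beta>)))
        - 3 * \<nu> * (M * (\<sigma> + \<beta>) + \<beta> * (1 + \<bar>a0 - c0\<bar>) + (\<bar>a0\<bar> + c0) * (\<sigma> + \<beta>))) * (p^2 + i^2 + q^2)"
      by (rule chet_ineq[OF Kp sgp pos(3) pos(4) pos(2) pos(5) pos(6) pos(7) c0p less_imp_le[OF Mp] K1 K2 Np])
    have coef: "(min (K * \<sigma> / 4) (min (\<gamma> / 2) (\<eta> / 2)) - \<bar>e1\<bar> / 2
        - Is * (2 * (\<beta> * (1 + \<bar>a0 - c0\<bar>) + (\<bar>a0\<bar> + c0) * (\<sigma> + \<beta>)))
        - 3 * \<nu> * (M * (\<sigma> + \<beta>) + \<beta> * (1 + \<bar>a0 - c0\<bar>) + (\<bar>a0\<bar> + c0) * (\<sigma> + \<beta>))) \<ge> c1"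
    proof -
      have "(min (K * \<sigma> / 4) (min (\<gamma> / 2) (\<eta> / 2)) - \<bar>e1\<bar> / 2
        - Is * (2 * (\<beta> * (1 + \<bar>a0 - c0\<bar>) + (\<bar>a0\<bar> + c0) * (\<sigma> + \<beta>)))
        - 3 * \<nu> * (M * (\<sigma> + \<beta>) + \<beta> * (1 + \<bar>a0 - c0\<bar>) + (\<bar>a0\<bar> + c0) * (\<sigma> + \<beta>))) = m1 - 3 * \<nu> * C3"
        unfolding m1_def CE_def C3_def by simp
      then show ?thesis using \<nu>C unfolding c1_def by linarith
    qed
    have Sg0: "p^2 + i^2 + q^2 \<ge> 0" by simp
    have iden: "M * (I - Is) * (I * (\<rho> * \<beta> * S - \<alpha> + \<beta> * (1 - S - I - R)))
     - ((S - Ss + R - Rs) - a0 * (I - Is)) * ((- \<beta> * I * S + \<gamma> * (1 - S - I - R) + \<eta> * R) + (\<alpha> * I - \<eta> * R) - a0 * (I * (\<rho> * \<beta> * S - \<alpha> + \<beta> * (1 - S - I - R))))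
     - ((R - Rs) - c0 * (I - Is)) * ((\<alpha> * I - \<eta> * R) - c0 * (I * (\<rho> * \<beta> * S - \<alpha> + \<beta> * (1 - S - I - R))))
     = (let s = p + (a0 - c0) * i - q; G = \<sigma> * i - (1 - \<rho>) * \<beta> * p - \<rho> * \<beta> * q
      in K * i * G + \<gamma> * p^2 - e1 * p * i + Is * (\<beta> * p * s + a0 * p * G) + \<eta> * q^2 + c0 * Is * q * G
         + (M * i^2 * G + \<beta> * p * i * s + a0 * p * i * G + c0 * q * i * G))"
    proof -
      have ha0: "\<gamma> * a0 = \<alpha> - \<gamma> - \<alpha> / \<rho>" using pos by (simp add: a0)
      have hc0: "\<eta> * c0 = \<alpha>" using pos by (simp add: c0)
      show ?thesis
        using em_identity[where S=S and I=I and R=R, OF eqR eqG eqU ha0 hc0 hM sg e1] unfolding p_def q_def i_def Let_def .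
    qed
    have DWF: "DW y (sir_field \<alpha> \<beta> \<gamma> \<eta> \<rho> y) = 2 * (M * (I - Is) * (I * (\<rho> * \<beta> * S - \<alpha> + \<beta> * (1 - S - I - R)))
     - ((S - Ss + R - Rs) - a0 * (I - Is)) * ((- \<beta> * I * S + \<gamma> * (1 - S - I - R) + \<eta> * R) + (\<alpha> * I - \<eta> * R) - a0 * (I * (\<rho> * \<beta> * S - \<alpha> + \<beta> * (1 - S - I - R))))
     - ((R - Rs) - c0 * (I - Is)) * ((\<alpha> * I - \<eta> * R) - c0 * (I * (\<rho> * \<beta> * S - \<alpha> + \<beta> * (1 - S - I - R)))))"
      unfolding y sir_field_simp DW_def Pf_def Qf_def by (simp add: algebra_simps)
    have "cW * W y \<le> cW * (M * (p^2 + i^2 + q^2))"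
    proof (rule mult_left_mono)
      have "W y = M * i^2 - p^2 - q^2" by (simp add: W_def Pf_def Qf_def y p_def q_def i_def)
      also have "\<dots> \<le> M * i^2 + M * p^2 + M * q^2"
      proof -
        have "M * p^2 \<ge> 0" "M * q^2 \<ge> 0" using Mp by simp_all
        moreover have "p^2 \<ge> 0" "q^2 \<ge> 0" by simp_all
        ultimately show ?thesis by linarith
      qed
      finally show "W y \<le> M * (p^2 + i^2 + q^2)" by (simp add: algebra_simps)
    qed (use cW in simp)
    also have "\<dots> = 2 * (c1 * (p^2 + i^2 + q^2))" using Mp by (simp add: cW_def)
    also have "\<dots> \<le> 2 * ((min (K * \<sigma> / 4) (min (\<gamma> / 2) (\<eta> / 2)) - \<bar>e1\<bar> / 2
        - Is * (2 * (\<beta> * (1 + \<bar>a0 - c0\<bar>) + (\<bar>a0\<bar> + c0) * (\<sigma> + \<beta>)))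
        - 3 * \<nu> * (M * (\<sigma> + \<beta>) + \<beta> * (1 + \<bar>a0 - c0\<bar>) + (\<bar>a0\<bar> + c0) * (\<sigma> + \<beta>))) * (p^2 + i^2 + q^2))"
      using coef Sg0 by (intro mult_left_mono mult_right_mono) auto
    also have "\<dots> \<le> DW y (sir_field \<alpha> \<beta> \<gamma> \<eta> \<rho> y)"
      unfolding DWF iden using ineq by simp
    finally show "cW * W y \<le> DW y (sir_field \<alpha> \<beta> \<gamma> \<eta> \<rho> y)" .
  next
    fix y :: "real \<times> real \<times> real" assume yb: "y \<in> cball e r0"
    obtain S I R where y: "y = (S, I, R)" by (cases y) auto
    have dy: "dist (S, I, R) (Ss, Is, Rs) \<le> r0" using yb by (simp add: y e_def dist_commute)
    have dI: "\<bar>I - Is\<bar> \<le> r0" using order_trans[OF dist3_comp(2) dy] by simp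
    have "W y \<le> M * (I - Is)^2" by (simp add: W_def y)
    also have "\<dots> \<le> M * r0^2" using dI Mp by (intro mult_left_mono) (auto simp: abs_le_square_iff[symmetric] power_mono)
    finally show "W y \<le> M * r0^2" .
  next
    fix \<delta> :: real assume d: "\<delta> > 0"
    define t where "t = \<delta> / (2 * (1 + \<bar>a0 - c0\<bar> + c0))"
    have tp: "t > 0" using d c0p by (simp add: t_def add_pos_nonneg)
    define y where "y = (Ss + (a0 - c0) * t, Is + t, Rs + c0 * t)"
    have "dist y e \<le> \<bar>(a0 - c0) * t\<bar> + \<bar>t\<bar> + \<bar>c0 * t\<bar>"
      using dist3_le[of "Ss + (a0 - c0) * t" "Is + t" "Rs + c0 * t" Ss Is Rs] by (simp add: y_def e_def)
    also have "\<dots> = (1 + \<bar>a0 - c0\<bar> + c0) * t"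
      by (simp only: abs_mult abs_of_pos[OF tp] abs_of_nonneg[OF c0p]) (simp add: algebra_simps)
    also have "\<dots> = \<delta> / 2"
    proof -
      have "1 + \<bar>a0 - c0\<bar> + c0 > 0" using c0p by (simp add: add_pos_nonneg)
      then show ?thesis by (simp add: t_def field_simps)
    qed
    also have "\<dots> < \<delta>" using d by simp
    finally have "dist y e < \<delta>" .
    moreover have "W y > 0"
    proof -
      have "W y = M * t^2" by (simp add: W_def Pf_def Qf_def y_def algebra_simps)
      then show ?thesis using Mp tp by simp
    qed
    ultimately show "\<exists>y. dist y e < \<delta> \<and> 0 < W y" by blast
  qed
qed

lemma endemic_char:
  fixes \<alpha> \<beta> \<gamma> \<eta> \<rho> :: real
  assumes pos: "\<alpha> > 0" "\<beta> > 0" "\<gamma> > 0" "\<eta> > 0" "0 < \<rho>" "\<rho> < 1"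
  shows "endemic_equilibrium \<alpha> \<beta> \<gamma> \<eta> \<rho> x \<longleftrightarrow>
    (\<exists>I>0. \<beta> * kappa \<alpha> \<eta> * I^2 + (\<alpha> * (2 - \<rho>) + \<rho> * \<gamma> * kappa \<alpha> \<eta> - \<beta>) * I + \<gamma> * (\<alpha> / \<beta> - \<rho>) = 0
         \<and> x = eq_point \<alpha> \<beta> \<gamma> \<eta> I)"
proof -
  define k where "k = kappa \<alpha> \<eta>"
  have hk: "\<eta> * k = \<eta> + \<alpha>" using pos by (simp add: k_def kappa_def field_simps)
  have Pequiv: "\<beta> * k * I^2 + (\<alpha> * (2 - \<rho>) + \<rho> * \<gamma> * k - \<beta>) * I + \<gamma> * (\<alpha> / \<beta> - \<rho>) = 0
      \<longleftrightarrow> \<beta> * (\<beta> * k * I^2 + (\<alpha> * (2 - \<rho>) + \<rho> * \<gamma> * k - \<beta>) * I) + \<gamma> * (\<alpha> - \<rho> * \<beta>) = 0" for I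
  proof -
    have "\<beta> * (\<beta> * k * I^2 + (\<alpha> * (2 - \<rho>) + \<rho> * \<gamma> * k - \<beta>) * I + \<gamma> * (\<alpha> / \<beta> - \<rho>))
        = \<beta> * (\<beta> * k * I^2 + (\<alpha> * (2 - \<rho>) + \<rho> * \<gamma> * k - \<beta>) * I) + \<gamma> * (\<alpha> - \<rho> * \<beta>)"
      using pos by (simp add: field_simps)
    then show ?thesis using pos by (metis mult_eq_0_iff not_less_iff_gr_or_eq)
  qed
  show ?thesis
    unfolding k_def[symmetric] Pequiv
  proof
    assume E: "endemic_equilibrium \<alpha> \<beta> \<gamma> \<eta> \<rho> x"
    obtain S I R where x: "x = (S, I, R)" by (cases x) auto
    have I: "I > 0" and S: "S \<ge> 0" and R: "R \<ge> 0" using E by (auto simp: endemic_equilibrium_def x)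
    have z: "sir_field \<alpha> \<beta> \<gamma> \<eta> \<rho> (S, I, R) = 0" using E by (simp add: endemic_equilibrium_def is_equilibrium_def x)
    have e1: "- \<beta> * I * S + \<gamma> * (1 - S - I - R) + \<eta> * R = 0"
      and e2: "\<rho> * \<beta> * I * S - \<alpha> * I + \<beta> * I * (1 - S - I - R) = 0"
      and e3: "\<alpha> * I - \<eta> * R = 0"
      using z by (simp_all add: sir_field_simp zero_prod_def)
    have hR: "\<eta> * R = \<alpha> * I" using e3 by simp
    have e2': "\<rho> * \<beta> * S - \<alpha> + \<beta> * (1 - S - I - R) = 0"
    proof -
      have "I * (\<rho> * \<beta> * S - \<alpha> + \<beta> * (1 - S - I - R)) = 0" using e2 by (simp add: algebra_simps)
      then show ?thesis using I by simp
    qed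
    have hS: "S * (\<beta> * I + \<gamma>) = \<gamma> * (1 - k * I) + \<alpha> * I"
    proof -
      have "\<eta> * (S * (\<beta> * I + \<gamma>) - (\<gamma> * (1 - k * I) + \<alpha> * I)) = 0"
        using e1 hR hk by algebra
      then show ?thesis using pos by simp
    qed
    have P: "\<beta> * (\<beta> * k * I^2 + (\<alpha> * (2 - \<rho>) + \<rho> * \<gamma> * k - \<beta>) * I) + \<gamma> * (\<alpha> - \<rho> * \<beta>) = 0"
    proof -
      have "\<eta> * (\<beta> * (\<beta> * k * I^2 + (\<alpha> * (2 - \<rho>) + \<rho> * \<gamma> * k - \<beta>) * I) + \<gamma> * (\<alpha> - \<rho> * \<beta>)) = 0"
        using hS e2' hR hk by algebra
      then show ?thesis using pos by simp
    qed
    have "x = eq_point \<alpha> \<beta> \<gamma> \<eta> I"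
    proof -
      have "\<beta> * I + \<gamma> > 0" using pos I by (simp add: add_pos_pos)
      then have "S = (\<gamma> * (1 - k * I) + \<alpha> * I) / (\<beta> * I + \<gamma>)" using hS by (simp add: field_simps)
      moreover have "R = \<alpha> / \<eta> * I" using hR pos by (simp add: field_simps)
      ultimately show ?thesis by (simp add: x eq_point_def k_def)
    qed
    then show "\<exists>I>0. \<beta> * (\<beta> * k * I^2 + (\<alpha> * (2 - \<rho>) + \<rho> * \<gamma> * k - \<beta>) * I) + \<gamma> * (\<alpha> - \<rho> * \<beta>) = 0 \<and> x = eq_point \<alpha> \<beta> \<gamma> \<eta> I"
      using I P by blast
  next
    assume "\<exists>I>0. \<beta> * (\<beta> * k * I^2 + (\<alpha> * (2 - \<rho>) + \<rho> * \<gamma> * k - \<beta>) * I) + \<gamma> * (\<alpha> - \<rho> * \<beta>) = 0 \<and> x = eq_point \<alpha> \<beta> \<gamma> \<eta> I"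
    then obtain I where I: "I > 0" and P: "\<beta> * (\<beta> * k * I^2 + (\<alpha> * (2 - \<rho>) + \<rho> * \<gamma> * k - \<beta>) * I) + \<gamma> * (\<alpha> - \<rho> * \<beta>) = 0"
      and x: "x = eq_point \<alpha> \<beta> \<gamma> \<eta> I" by blast
    define S where "S = (\<gamma> * (1 - k * I) + \<alpha> * I) / (\<beta> * I + \<gamma>)"
    define R where "R = \<alpha> / \<eta> * I"
    have x': "x = (S, I, R)" by (simp add: x eq_point_def S_def R_def k_def)
    have den: "\<beta> * I + \<gamma> > 0" using pos I by (simp add: add_pos_pos)
    have hS: "S * (\<beta> * I + \<gamma>) = \<gamma> * (1 - k * I) + \<alpha> * I" using den by (simp add: S_def)
    have hR: "\<eta> * R = \<alpha> * I" using pos by (simp add: R_def)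
    have e2': "\<rho> * \<beta> * S - \<alpha> + \<beta> * (1 - S - I - R) = 0"
    proof -
      have "(\<beta> * I + \<gamma>) * (\<eta> * (\<rho> * \<beta> * S - \<alpha> + \<beta> * (1 - S - I - R))) = 0"
        using hS P hR hk by algebra
      then show ?thesis using den pos by simp
    qed
    have Spos: "S > 0"
    proof -
      have "\<eta> * (\<beta> * ((\<beta> * I + \<rho> * \<gamma>) * S) - (\<gamma> * \<alpha> + \<alpha> * \<beta> * I)) = 0"
        using hS e2' hR hk by algebra
      then have "\<beta> * ((\<beta> * I + \<rho> * \<gamma>) * S) = \<gamma> * \<alpha> + \<alpha> * \<beta> * I" using pos by simp
      moreover have "\<gamma> * \<alpha> + \<alpha> * \<beta> * I > 0" using pos I by (simp add: add_pos_pos)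
      moreover have "\<beta> * I + \<rho> * \<gamma> > 0" using pos I by (simp add: add_pos_pos)
      ultimately have "0 < (\<beta> * (\<beta> * I + \<rho> * \<gamma>)) * S" "0 < \<beta> * (\<beta> * I + \<rho> * \<gamma>)"
        using pos by (simp_all add: mult.assoc)
      then show ?thesis using zero_less_mult_pos by blast
    qed
    have z: "sir_field \<alpha> \<beta> \<gamma> \<eta> \<rho> (S, I, R) = 0"
    proof -
      have "- \<beta> * I * S + \<gamma> * (1 - S - I - R) + \<eta> * R = 0"
      proof -
        have "\<eta> * (- \<beta> * I * S + \<gamma> * (1 - S - I - R) + \<eta> * R) = 0" using hS hR hk by algebra
        then show ?thesis using pos by simp
      qed
      moreover have "\<rho> * \<beta> * I * S - \<alpha> * I + \<beta> * I * (1 - S - I - R) = 0"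
        using e2' by (metis (no_types, opaque_lifting) mult.assoc mult.commute mult_zero_right ring_class.ring_distribs(1) right_diff_distrib')
      moreover have "\<alpha> * I - \<eta> * R = 0" using hR by simp
      ultimately show ?thesis by (simp add: sir_field_simp zero_prod_def)
    qed
    show "endemic_equilibrium \<alpha> \<beta> \<gamma> \<eta> \<rho> x"
      unfolding endemic_equilibrium_def is_equilibrium_def x' using z I Spos hR pos
      by (auto simp: R_def)
  qed
qed

lemma roots_char:
  fixes \<alpha> \<beta> \<gamma> \<eta> \<rho> I :: real
  assumes pos: "\<beta> > 0" "kappa \<alpha> \<eta> > 0"
  shows "\<beta> * kappa \<alpha> \<eta> * I^2 + (\<alpha> * (2 - \<rho>) + \<rho> * \<gamma> * kappa \<alpha> \<eta> - \<beta>) * I + \<gamma> * (\<alpha> / \<beta> - \<rho>) = 0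
    \<longleftrightarrow> disc \<alpha> \<beta> \<gamma> \<eta> \<rho> \<ge> 0 \<and> (I = I_plus \<alpha> \<beta> \<gamma> \<eta> \<rho> \<or> I = I_minus \<alpha> \<beta> \<gamma> \<eta> \<rho>)"
proof -
  define a where "a = \<beta> * kappa \<alpha> \<eta>"
  define b where "b = \<alpha> * (2 - \<rho>) + \<rho> * \<gamma> * kappa \<alpha> \<eta> - \<beta>"
  define c where "c = \<gamma> * (\<alpha> / \<beta> - \<rho>)"
  have a: "a \<noteq> 0" using pos by (simp add: a_def)
  have d: "discrim a b c = disc \<alpha> \<beta> \<gamma> \<eta> \<rho>" by (simp add: discrim_def disc_def a_def b_def c_def)
  have mb: "- b = \<beta> - \<rho> * \<gamma> * kappa \<alpha> \<eta> - \<alpha> * (2 - \<rho>)" by (simp add: b_def)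
  have ip: "I_plus \<alpha> \<beta> \<gamma> \<eta> \<rho> = (- b + sqrt (discrim a b c)) / (2 * a)"
    unfolding d unfolding I_plus_def mb a_def by (simp add: mult.assoc)
  have im: "I_minus \<alpha> \<beta> \<gamma> \<eta> \<rho> = (- b - sqrt (discrim a b c)) / (2 * a)"
    unfolding d unfolding I_minus_def mb a_def by (simp add: mult.assoc)
  have key: "a * I^2 + b * I + c = 0 \<longleftrightarrow> disc \<alpha> \<beta> \<gamma> \<eta> \<rho> \<ge> 0 \<and> (I = I_plus \<alpha> \<beta> \<gamma> \<eta> \<rho> \<or> I = I_minus \<alpha> \<beta> \<gamma> \<eta> \<rho>)"
    unfolding ip im d[symmetric] by (rule discriminant_iff[OF a])
  then show ?thesis by (simp only: a_def b_def c_def)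
qed

lemma alg_facts:
  fixes \<alpha> \<beta> \<gamma> \<eta> \<rho> :: real
  assumes pos: "\<alpha> > 0" "\<beta> > 0" "\<gamma> > 0" "\<eta> > 0" "0 < \<rho>" "\<rho> < 1" and ga: "\<gamma> \<ge> \<alpha>"
    and rs: "\<rho> < rho_star \<alpha> \<gamma> \<eta>"
  defines "k \<equiv> kappa \<alpha> \<eta>"
  defines "q \<equiv> sqrt (\<alpha> * \<gamma> * k)"
  defines "xp \<equiv> \<alpha> * (2 - \<rho>) - \<rho> * \<gamma> * k + 2 * (1 - \<rho>) * q"
  defines "xm \<equiv> \<alpha> * (2 - \<rho>) - \<rho> * \<gamma> * k - 2 * (1 - \<rho>) * q"
  shows "k > 1" "q > \<alpha>" "q^2 = \<alpha> * \<gamma> * k" "\<alpha> - \<rho> * \<alpha> - \<rho> * q > 0"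
    "RC \<alpha> \<gamma> \<eta> \<rho> = \<rho> * xp / \<alpha>"
    "RC \<alpha> \<gamma> \<eta> \<rho> < 1"
    "xm < 0"
    "xp > \<alpha> * (2 - \<rho>) + \<rho> * \<gamma> * k"
    "disc \<alpha> \<beta> \<gamma> \<eta> \<rho> = (\<beta> - xp) * (\<beta> - xm)"
proof -
  show k: "k > 1" using pos by (simp add: k_def kappa_def)
  have agk: "\<alpha> * \<gamma> * k > \<alpha>^2"
  proof -
    have "\<gamma> * k > \<alpha>" using ga k pos by (smt (verit) mult_less_cancel_left1)
    then have "\<alpha> * (\<gamma> * k) > \<alpha> * \<alpha>" using pos by simp
    then show ?thesis by (simp add: power2_eq_square mult.assoc)
  qed
  show q2: "q^2 = \<alpha> * \<gamma> * k" unfolding q_def using pos k by simp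
  show qa: "q > \<alpha>" unfolding q_def using agk pos by (metis abs_of_pos real_sqrt_abs real_sqrt_less_iff)
  have gk: "\<gamma> * k - \<alpha> > 0" using agk pos by (simp add: power2_eq_square)
  have rs': "\<rho> * (\<gamma> * k - \<alpha>) < q - \<alpha>"
    using rs gk unfolding rho_star_def k_def[symmetric] q_def[symmetric] by (simp add: pos_less_divide_eq)
  have "\<alpha> * (\<rho> * (\<gamma> * k - \<alpha>)) < \<alpha> * (q - \<alpha>)" using rs' pos by simp
  moreover have "\<alpha> * (\<rho> * (\<gamma> * k - \<alpha>)) = (q - \<alpha>) * (\<rho> * (q + \<alpha>))"
    using q2 by (simp add: power2_eq_square algebra_simps)
  ultimately have "(q - \<alpha>) * (\<rho> * (q + \<alpha>)) < (q - \<alpha>) * \<alpha>" by (simp add: mult.commute)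
  then have "\<rho> * (q + \<alpha>) < \<alpha>" using qa by simp
  then show D0: "\<alpha> - \<rho> * \<alpha> - \<rho> * q > 0" by (simp add: algebra_simps)
  show RCx: "RC \<alpha> \<gamma> \<eta> \<rho> = \<rho> * xp / \<alpha>"
    unfolding RC_def k_def[symmetric] q_def[symmetric] xp_def using pos by (simp add: field_simps power2_eq_square)
  have "RC \<alpha> \<gamma> \<eta> \<rho> = 1 - ((\<alpha> - \<rho> * \<alpha> - \<rho> * q) / \<alpha>)^2"
  proof -
    have "\<alpha>^2 * (RC \<alpha> \<gamma> \<eta> \<rho>) = \<alpha>^2 * (1 - ((\<alpha> - \<rho> * \<alpha> - \<rho> * q) / \<alpha>)^2)"
      unfolding RCx xp_def using pos q2 by (simp add: field_simps power2_eq_square)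
    then show ?thesis using pos by simp
  qed
  moreover have "((\<alpha> - \<rho> * \<alpha> - \<rho> * q) / \<alpha>)^2 > 0" using D0 pos by simp
  ultimately show "RC \<alpha> \<gamma> \<eta> \<rho> < 1" by linarith
  have "\<alpha> * xm = - ((q - \<alpha>) * (\<rho> * (q - \<alpha>) + 2 * \<alpha>))"
    unfolding xm_def using q2 pos by (simp add: power2_eq_square algebra_simps)
  moreover have "(q - \<alpha>) * (\<rho> * (q - \<alpha>) + 2 * \<alpha>) > 0" using qa pos by (simp add: add_pos_pos)
  ultimately have "\<alpha> * xm < 0" by linarith
  then show "xm < 0" using pos by (simp add: mult_less_0_iff)
  have "\<alpha> * (xp - (\<alpha> * (2 - \<rho>) + \<rho> * \<gamma> * k)) = 2 * q * (\<alpha> - \<rho> * \<alpha> - \<rho> * q)"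
    unfolding xp_def using q2 pos by (simp add: power2_eq_square algebra_simps)
  moreover have "2 * q * (\<alpha> - \<rho> * \<alpha> - \<rho> * q) > 0" using D0 qa pos by simp
  ultimately show "xp > \<alpha> * (2 - \<rho>) + \<rho> * \<gamma> * k" using pos by (smt (verit) mult_pos_pos zero_less_mult_iff)
  show "disc \<alpha> \<beta> \<gamma> \<eta> \<rho> = (\<beta> - xp) * (\<beta> - xm)"
  proof -
    have ab: "\<beta> * (\<alpha> / \<beta>) = \<alpha>" using pos by simp
    have ss: "(1 - \<rho>)^2 + \<rho> * (2 - \<rho>) = 1" by (simp add: power2_eq_square algebra_simps)
    have gen: "(\<alpha> * (2 - \<rho>) + \<rho> * \<gamma> * k - \<beta>)^2 - 4 * (\<beta> * k) * (\<gamma> * (w - \<rho>)) =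
      (\<beta> - (\<alpha> * (2 - \<rho>) - \<rho> * \<gamma> * k + 2 * (1 - \<rho>) * q)) *
      (\<beta> - (\<alpha> * (2 - \<rho>) - \<rho> * \<gamma> * k - 2 * (1 - \<rho>) * q))" if "\<beta> * w = \<alpha>" for w
    proof -
      have "(\<alpha> * (2 - \<rho>) + \<rho> * \<gamma> * k - \<beta>)^2 - 4 * (\<beta> * k) * (\<gamma> * (w - \<rho>)) -
      (\<beta> - (\<alpha> * (2 - \<rho>) - \<rho> * \<gamma> * k + 2 * (1 - \<rho>) * q)) *
      (\<beta> - (\<alpha> * (2 - \<rho>) - \<rho> * \<gamma> * k - 2 * (1 - \<rho>) * q))
        = -4 * k * \<gamma> * (\<beta> * w - \<alpha>) + 4 * (1 - \<rho>)^2 * (q^2 - \<alpha> * \<gamma> * k)"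
        by (simp add: algebra_simps power2_eq_square)
      then show ?thesis using that q2 by simp
    qed
    show ?thesis unfolding disc_def k_def[symmetric] xp_def xm_def
      by (rule gen[OF ab])
  qed
qed

lemma alg_main:
  fixes \<alpha> \<beta> \<gamma> \<eta> \<rho> :: real
  assumes pos: "\<alpha> > 0" "\<beta> > 0" "\<gamma> > 0" "\<eta> > 0" "0 < \<rho>" "\<rho> < 1" and ga: "\<gamma> \<ge> \<alpha>"
    and rs: "\<rho> < rho_star \<alpha> \<gamma> \<eta>"
  shows "(R0 \<alpha> \<beta> \<rho> < RC \<alpha> \<gamma> \<eta> \<rho> \<longrightarrow>
        {x. endemic_equilibrium \<alpha> \<beta> \<gamma> \<eta> \<rho> x} = {})
     \<and> (RC \<alpha> \<gamma> \<eta> \<rho> \<le> R0 \<alpha> \<beta> \<rho> \<and> R0 \<alpha> \<beta> \<rho> < 1 \<longrightarrow>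
        {x. endemic_equilibrium \<alpha> \<beta> \<gamma> \<eta> \<rho> x}
          = {E_plus \<alpha> \<beta> \<gamma> \<eta> \<rho>, E_minus \<alpha> \<beta> \<gamma> \<eta> \<rho>}
        \<and> (E_plus \<alpha> \<beta> \<gamma> \<eta> \<rho> = E_minus \<alpha> \<beta> \<gamma> \<eta> \<rho>
             \<longleftrightarrow> RC \<alpha> \<gamma> \<eta> \<rho> = R0 \<alpha> \<beta> \<rho>))
     \<and> (1 \<le> R0 \<alpha> \<beta> \<rho> \<longrightarrow>
        {x. endemic_equilibrium \<alpha> \<beta> \<gamma> \<eta> \<rho> x} = {E_plus \<alpha> \<beta> \<gamma> \<eta> \<rho>})"
proof -
  define k where "k = kappa \<alpha> \<eta>"
  define q where "q = sqrt (\<alpha> * \<gamma> * k)"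
  define xp where "xp = \<alpha> * (2 - \<rho>) - \<rho> * \<gamma> * k + 2 * (1 - \<rho>) * q"
  define xm where "xm = \<alpha> * (2 - \<rho>) - \<rho> * \<gamma> * k - 2 * (1 - \<rho>) * q"
  note F = alg_facts[OF pos ga rs, folded k_def, folded q_def, folded xp_def xm_def]
  have k: "k > 0" using F(1) by simp
  define b where "b = \<alpha> * (2 - \<rho>) + \<rho> * \<gamma> * k - \<beta>"
  define C where "C = \<gamma> * (\<alpha> / \<beta> - \<rho>)"
  have dd: "disc \<alpha> \<beta> \<gamma> \<eta> \<rho> = b^2 - 4 * (\<beta> * k) * C" by (simp add: disc_def b_def C_def k_def)
  have Ip: "I_plus \<alpha> \<beta> \<gamma> \<eta> \<rho> = (- b + sqrt (disc \<alpha> \<beta> \<gamma> \<eta> \<rho>)) / (2 * \<beta> * k)"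
    by (simp add: I_plus_def b_def k_def)
  have Im: "I_minus \<alpha> \<beta> \<gamma> \<eta> \<rho> = (- b - sqrt (disc \<alpha> \<beta> \<gamma> \<eta> \<rho>)) / (2 * \<beta> * k)"
    by (simp add: I_minus_def b_def k_def)
  have den: "2 * \<beta> * k > 0" using pos k by simp
  have R0RC: "R0 \<alpha> \<beta> \<rho> \<ge> RC \<alpha> \<gamma> \<eta> \<rho> \<longleftrightarrow> \<beta> \<ge> xp"
    unfolding R0_def F(5) using pos by (simp add: divide_le_cancel mult_le_cancel_left_pos)
  have R0RCeq: "R0 \<alpha> \<beta> \<rho> = RC \<alpha> \<gamma> \<eta> \<rho> \<longleftrightarrow> \<beta> = xp"
    unfolding R0_def F(5) using pos by (simp add: field_simps)
  have R01: "R0 \<alpha> \<beta> \<rho> < 1 \<longleftrightarrow> C > 0"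
    unfolding R0_def C_def using pos by (simp add: field_simps)
  have bxm: "\<beta> - xm > 0" using F(7) pos by simp
  have set_eq: "{x. endemic_equilibrium \<alpha> \<beta> \<gamma> \<eta> \<rho> x} =
     {x. \<exists>I>0. disc \<alpha> \<beta> \<gamma> \<eta> \<rho> \<ge> 0 \<and> (I = I_plus \<alpha> \<beta> \<gamma> \<eta> \<rho> \<or> I = I_minus \<alpha> \<beta> \<gamma> \<eta> \<rho>) \<and> x = eq_point \<alpha> \<beta> \<gamma> \<eta> I}"
  proof -
    have rc: "\<beta> * kappa \<alpha> \<eta> * I^2 + (\<alpha> * (2 - \<rho>) + \<rho> * \<gamma> * kappa \<alpha> \<eta> - \<beta>) * I + \<gamma> * (\<alpha> / \<beta> - \<rho>) = 0
      \<longleftrightarrow> disc \<alpha> \<beta> \<gamma> \<eta> \<rho> \<ge> 0 \<and> (I = I_plus \<alpha> \<beta> \<gamma> \<eta> \<rho> \<or> I = I_minus \<alpha> \<beta> \<gamma> \<eta> \<rho>)" for I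
      using roots_char[where \<alpha>=\<alpha> and \<beta>=\<beta> and \<gamma>=\<gamma> and \<eta>=\<eta> and \<rho>=\<rho> and I=I] pos(2) k unfolding k_def by blast
    show ?thesis using endemic_char[OF pos] rc by auto
  qed
  have fstI: "fst (snd (eq_point \<alpha> \<beta> \<gamma> \<eta> I)) = I" for I by (simp add: eq_point_def)
  show ?thesis
  proof (intro conjI impI)
    assume "R0 \<alpha> \<beta> \<rho> < RC \<alpha> \<gamma> \<eta> \<rho>"
    then have "\<beta> < xp" using R0RC by linarith
    then have "disc \<alpha> \<beta> \<gamma> \<eta> \<rho> < 0" using F(9) bxm by (simp add: mult_neg_pos)
    then show "{x. endemic_equilibrium \<alpha> \<beta> \<gamma> \<eta> \<rho> x} = {}" unfolding set_eq by auto
  next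
    assume H: "RC \<alpha> \<gamma> \<eta> \<rho> \<le> R0 \<alpha> \<beta> \<rho> \<and> R0 \<alpha> \<beta> \<rho> < 1"
    then have bx: "\<beta> \<ge> xp" and Cp: "C > 0" using R0RC R01 by auto
    have dn: "disc \<alpha> \<beta> \<gamma> \<eta> \<rho> \<ge> 0" using F(9) bx bxm by simp
    have mb: "- b > 0" using F(8) bx unfolding b_def by linarith
    have "disc \<alpha> \<beta> \<gamma> \<eta> \<rho> < b^2" unfolding dd using pos k Cp by simp
    then have "sqrt (disc \<alpha> \<beta> \<gamma> \<eta> \<rho>) < sqrt (b^2)" by (rule real_sqrt_less_mono)
    then have sl: "sqrt (disc \<alpha> \<beta> \<gamma> \<eta> \<rho>) < - b" using mb by simp
    have Imp: "I_minus \<alpha> \<beta> \<gamma> \<eta> \<rho> > 0" unfolding Im using sl den by simp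
    have Ipp: "I_plus \<alpha> \<beta> \<gamma> \<eta> \<rho> > 0" unfolding Ip using mb den real_sqrt_ge_zero[OF dn] by (intro divide_pos_pos; linarith)
    show "{x. endemic_equilibrium \<alpha> \<beta> \<gamma> \<eta> \<rho> x} = {E_plus \<alpha> \<beta> \<gamma> \<eta> \<rho>, E_minus \<alpha> \<beta> \<gamma> \<eta> \<rho>}"
      unfolding set_eq E_plus_def E_minus_def using dn Imp Ipp by auto
    show "E_plus \<alpha> \<beta> \<gamma> \<eta> \<rho> = E_minus \<alpha> \<beta> \<gamma> \<eta> \<rho> \<longleftrightarrow> RC \<alpha> \<gamma> \<eta> \<rho> = R0 \<alpha> \<beta> \<rho>"
    proof -
      have "E_plus \<alpha> \<beta> \<gamma> \<eta> \<rho> = E_minus \<alpha> \<beta> \<gamma> \<eta> \<rho> \<longleftrightarrow> I_plus \<alpha> \<beta> \<gamma> \<eta> \<rho> = I_minus \<alpha> \<beta> \<gamma> \<eta> \<rho>"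
        unfolding E_plus_def E_minus_def by (metis fstI)
      also have "\<dots> \<longleftrightarrow> sqrt (disc \<alpha> \<beta> \<gamma> \<eta> \<rho>) = 0" unfolding Ip Im using den by (auto simp: divide_cancel_right)
      also have "\<dots> \<longleftrightarrow> disc \<alpha> \<beta> \<gamma> \<eta> \<rho> = 0" by simp
      also have "\<dots> \<longleftrightarrow> \<beta> = xp" unfolding F(9) using bxm by simp
      also have "\<dots> \<longleftrightarrow> RC \<alpha> \<gamma> \<eta> \<rho> = R0 \<alpha> \<beta> \<rho>" using R0RCeq by auto
      finally show ?thesis .
    qed
  next
    assume H: "1 \<le> R0 \<alpha> \<beta> \<rho>"
    then have "RC \<alpha> \<gamma> \<eta> \<rho> \<le> R0 \<alpha> \<beta> \<rho>" using F(6) by linarith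
    then have bx: "\<beta> \<ge> xp" using R0RC by simp
    have Cn: "C \<le> 0" using H R01 by linarith
    have mb: "- b > 0" using F(8) bx unfolding b_def by linarith
    have "disc \<alpha> \<beta> \<gamma> \<eta> \<rho> \<ge> b^2"
    proof -
      have "4 * (\<beta> * k) * C \<le> 0" using pos k Cn by (simp add: mult_nonneg_nonpos)
      then show ?thesis unfolding dd by linarith
    qed
    then have "sqrt (disc \<alpha> \<beta> \<gamma> \<eta> \<rho>) \<ge> sqrt (b^2)" by (rule real_sqrt_le_mono)
    then have sl: "sqrt (disc \<alpha> \<beta> \<gamma> \<eta> \<rho>) \<ge> - b" using mb by simp
    have dn: "disc \<alpha> \<beta> \<gamma> \<eta> \<rho> \<ge> 0" using \<open>disc \<alpha> \<beta> \<gamma> \<eta> \<rho> \<ge> b^2\<close> by (smt (verit) zero_le_power2)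
    have Imn: "\<not> I_minus \<alpha> \<beta> \<gamma> \<eta> \<rho> > 0" unfolding Im using sl den by (simp add: divide_less_0_iff not_less divide_nonpos_pos)
    have Ipp: "I_plus \<alpha> \<beta> \<gamma> \<eta> \<rho> > 0" unfolding Ip using mb den real_sqrt_ge_zero[OF dn] by (intro divide_pos_pos; linarith)
    show "{x. endemic_equilibrium \<alpha> \<beta> \<gamma> \<eta> \<rho> x} = {E_plus \<alpha> \<beta> \<gamma> \<eta> \<rho>}"
      unfolding set_eq E_plus_def using dn Imn Ipp by auto
  qed
qed

lemma E_minus_cont:
  fixes \<alpha> \<gamma> \<eta> \<rho> b0 :: real
  assumes "b0 > 0" "\<gamma> > 0" "\<eta> > 0" "\<alpha> > 0" and I0: "I_minus \<alpha> b0 \<gamma> \<eta> \<rho> = 0"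
  shows "isCont (\<lambda>b. E_minus \<alpha> b \<gamma> \<eta> \<rho>) b0"
proof -
  have k: "kappa \<alpha> \<eta> > 0" using assms by (simp add: kappa_def add_pos_pos)
  have cI: "isCont (\<lambda>b. I_minus \<alpha> b \<gamma> \<eta> \<rho>) b0"
    unfolding I_minus_def disc_def using assms k
    by (auto intro!: continuous_intros)
  have "isCont (\<lambda>b. eq_point \<alpha> b \<gamma> \<eta> (I_minus \<alpha> b \<gamma> \<eta> \<rho>)) b0"
    unfolding eq_point_def using assms cI I0
    by (auto intro!: continuous_intros)
  then show ?thesis unfolding E_minus_def .
qed

lemma em_unstable:
  fixes \<alpha> b \<gamma> \<eta> \<rho> Ss Is Rs :: real
  assumes pos: "\<alpha> > 0" "b > 0" "\<gamma> > 0" "\<eta> > 0" "0 < \<rho>" "\<rho> < 1"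
    and E: "endemic_equilibrium \<alpha> b \<gamma> \<eta> \<rho> (Ss, Is, Rs)"
    and a0: "a0 = (\<alpha> - \<gamma> - \<alpha> / \<rho>) / \<gamma>" and c0: "c0 = \<alpha> / \<eta>"
    and sh: "- (1 - \<rho>) * a0 - \<rho> * c0 - 1 > 0"
    and sg: "\<sigma> = - (1 - \<rho>) * b * a0 - \<rho> * b * c0 - b"
    and K: "K = \<sigma> * min (\<gamma> / (2 * ((1 - \<rho>) * b)^2)) (\<eta> / (2 * (\<rho> * b)^2))"
    and small: "\<bar>\<alpha> / \<rho> - b * Ss\<bar> / 2 + Is * (2 * (b * (1 + \<bar>a0 - c0\<bar>) + (\<bar>a0\<bar> + c0) * (\<sigma> + b)))
                  < min (K * \<sigma> / 4) (min (\<gamma> / 2) (\<eta> / 2))"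
  shows "unstable (sir_field \<alpha> b \<gamma> \<eta> \<rho>) (Ss, Is, Rs)"
proof -
  have I: "Is > 0" using E by (simp add: endemic_equilibrium_def)
  have z: "sir_field \<alpha> b \<gamma> \<eta> \<rho> (Ss, Is, Rs) = 0" using E by (simp add: endemic_equilibrium_def is_equilibrium_def)
  have e1: "- b * Is * Ss + \<gamma> * (1 - Ss - Is - Rs) + \<eta> * Rs = 0"
    and e2: "\<rho> * b * Is * Ss - \<alpha> * Is + b * Is * (1 - Ss - Is - Rs) = 0"
    and e3: "\<alpha> * Is - \<eta> * Rs = 0"
    using z by (simp_all add: sir_field_simp zero_prod_def)
  have eqR: "\<eta> * Rs = \<alpha> * Is" using e3 by simp
  have eqG: "\<rho> * b * Ss - \<alpha> + b * (1 - Ss - Is - Rs) = 0"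
  proof -
    have "Is * (\<rho> * b * Ss - \<alpha> + b * (1 - Ss - Is - Rs)) = 0" using e2 by (simp add: algebra_simps)
    then show ?thesis using I by simp
  qed
  have eqU: "- b * Is * Ss + \<gamma> * (1 - Ss - Is - Rs) + \<alpha> * Is = 0" using e1 eqR by simp
  have sgp: "\<sigma> > 0"
  proof -
    have "\<sigma> = b * (- (1 - \<rho>) * a0 - \<rho> * c0 - 1)" by (simp add: sg algebra_simps)
    then show ?thesis using sh pos by simp
  qed
  show ?thesis
    by (rule em_unstable_core[OF pos(1-6) I eqR eqG eqU a0 c0 sg refl K sgp small])
qed

lemma bifurcation:
  fixes \<alpha> \<beta> \<gamma> \<eta> \<rho> :: real
  assumes pos: "\<alpha> > 0" "\<gamma> > 0" "\<eta> > 0" "0 < \<rho>" "\<rho> < 1" and ga: "\<gamma> \<ge> \<alpha>"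
    and rs: "\<rho> < rho_star \<alpha> \<gamma> \<eta>"
  shows "\<exists>\<delta>>0.
          (\<forall>b. \<alpha> / \<rho> - \<delta> < b \<and> b < \<alpha> / \<rho> \<longrightarrow>
              loc_asympt_stable (sir_field \<alpha> b \<gamma> \<eta> \<rho>) (1, 0, 0)
              \<and> endemic_equilibrium \<alpha> b \<gamma> \<eta> \<rho> (E_minus \<alpha> b \<gamma> \<eta> \<rho>)
              \<and> unstable (sir_field \<alpha> b \<gamma> \<eta> \<rho>) (E_minus \<alpha> b \<gamma> \<eta> \<rho>))
          \<and> (\<forall>b. \<alpha> / \<rho> < b \<and> b < \<alpha> / \<rho> + \<delta> \<longrightarrow>
              unstable (sir_field \<alpha> b \<gamma> \<eta> \<rho>) (1, 0, 0))
          \<and> ((\<lambda>b. E_minus \<alpha> b \<gamma> \<eta> \<rho>) \<longlongrightarrow> (1, 0, 0)) (at_left (\<alpha> / \<rho>))"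
proof -
  define b0 where "b0 = \<alpha> / \<rho>"
  have b0: "b0 > 0" using pos by (simp add: b0_def)
  have rb0: "\<rho> * b0 = \<alpha>" using pos by (simp add: b0_def)
  define k where "k = kappa \<alpha> \<eta>"
  define q where "q = sqrt (\<alpha> * \<gamma> * k)"
  define xp where "xp = \<alpha> * (2 - \<rho>) - \<rho> * \<gamma> * k + 2 * (1 - \<rho>) * q"
  define xm where "xm = \<alpha> * (2 - \<rho>) - \<rho> * \<gamma> * k - 2 * (1 - \<rho>) * q"
  note F = alg_facts[OF pos(1) b0 pos(2-5) ga rs, folded k_def, folded q_def, folded xp_def xm_def]
  have k: "k > 0" using F(1) by simp
  have xpb0: "xp < b0"
  proof -
    have "\<rho> * xp / \<alpha> < 1" using F(5,6) by simp
    then have "\<rho> * xp < \<alpha>" using pos by (simp add: divide_less_eq)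
    then show ?thesis using pos unfolding b0_def by (simp add: less_divide_eq mult.commute)
  qed
  have I0: "I_minus \<alpha> b0 \<gamma> \<eta> \<rho> = 0"
  proof -
    define bb where "bb = \<alpha> * (2 - \<rho>) + \<rho> * \<gamma> * k - b0"
    have bbn: "bb < 0" using F(8) xpb0 unfolding bb_def by linarith
    have "\<alpha> / b0 - \<rho> = 0" using pos by (simp add: b0_def)
    then have "disc \<alpha> b0 \<gamma> \<eta> \<rho> = bb^2" by (simp add: disc_def bb_def k_def)
    then have "sqrt (disc \<alpha> b0 \<gamma> \<eta> \<rho>) = - bb" using bbn by simp
    then show ?thesis by (simp add: I_minus_def bb_def k_def)
  qed
  have Em0: "E_minus \<alpha> b0 \<gamma> \<eta> \<rho> = (1, 0, 0)"
    using I0 pos by (simp add: E_minus_def eq_point_def)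
  have cE: "isCont (\<lambda>b. E_minus \<alpha> b \<gamma> \<eta> \<rho>) b0" by (rule E_minus_cont[OF b0 pos(2) pos(3) pos(1) I0])
  define a0 where "a0 = (\<alpha> - \<gamma> - \<alpha> / \<rho>) / \<gamma>"
  define c0 where "c0 = \<alpha> / \<eta>"
  have sh: "- (1 - \<rho>) * a0 - \<rho> * c0 - 1 > 0"
  proof -
    have e: "\<rho> * \<gamma> * (- (1 - \<rho>) * a0 - \<rho> * c0 - 1) = (1 - \<rho>)^2 * \<alpha> - \<rho>^2 * \<gamma> * k"
      unfolding a0_def c0_def k_def kappa_def using pos by (simp add: field_simps power2_eq_square)
    have "\<alpha> * ((1 - \<rho>)^2 * \<alpha> - \<rho>^2 * \<gamma> * k) = ((1 - \<rho>) * \<alpha> - \<rho> * q) * ((1 - \<rho>) * \<alpha> + \<rho> * q)"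
      using F(3) by (simp add: power2_eq_square algebra_simps)
    moreover have "((1 - \<rho>) * \<alpha> - \<rho> * q) > 0" using F(4) by (simp add: algebra_simps)
    moreover have "(1 - \<rho>) * \<alpha> + \<rho> * q > 0" using pos F(2) by (simp add: add_pos_pos)
    ultimately have "\<alpha> * ((1 - \<rho>)^2 * \<alpha> - \<rho>^2 * \<gamma> * k) > 0" by simp
    then have "(1 - \<rho>)^2 * \<alpha> - \<rho>^2 * \<gamma> * k > 0" using pos by (simp add: zero_less_mult_iff)
    then have "\<rho> * \<gamma> * (- (1 - \<rho>) * a0 - \<rho> * c0 - 1) > 0" using e by simp
    moreover have "\<rho> * \<gamma> > 0" using pos by simp
    ultimately show ?thesis using zero_less_mult_pos by blast
  qed
  define sgf where "sgf = (\<lambda>b::real. - (1 - \<rho>) * b * a0 - \<rho> * b * c0 - b)"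
  define Kf where "Kf = (\<lambda>b::real. sgf b * min (\<gamma> / (2 * ((1 - \<rho>) * b)^2)) (\<eta> / (2 * (\<rho> * b)^2)))"
  define Phi where "Phi = (\<lambda>b::real. min (Kf b * sgf b / 4) (min (\<gamma> / 2) (\<eta> / 2))
      - (\<bar>\<alpha> / \<rho> - b * fst (E_minus \<alpha> b \<gamma> \<eta> \<rho>)\<bar> / 2
         + fst (snd (E_minus \<alpha> b \<gamma> \<eta> \<rho>)) * (2 * (b * (1 + \<bar>a0 - c0\<bar>) + (\<bar>a0\<bar> + c0) * (sgf b + b)))))"
  have cfst: "isCont (\<lambda>b. fst (E_minus \<alpha> b \<gamma> \<eta> \<rho>)) b0" using cE by (intro continuous_intros)
  have csnd: "isCont (\<lambda>b. fst (snd (E_minus \<alpha> b \<gamma> \<eta> \<rho>))) b0" using cE by (intro continuous_intros)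
  have cPhi: "isCont Phi b0"
    unfolding Phi_def Kf_def sgf_def using cfst csnd b0 pos
    by (auto intro!: continuous_intros)
  have sg0: "sgf b0 > 0"
  proof -
    have "sgf b0 = b0 * (- (1 - \<rho>) * a0 - \<rho> * c0 - 1)" by (simp add: sgf_def algebra_simps)
    then show ?thesis using sh b0 by simp
  qed
  have K0: "Kf b0 > 0" unfolding Kf_def using sg0 pos b0 by simp
  have Phi0: "Phi b0 > 0"
    unfolding Phi_def Em0 using K0 sg0 pos by (simp add: b0_def)
  have ev1: "eventually (\<lambda>b. Phi b > 0) (at_left b0)"
  proof -
    have "(Phi \<longlongrightarrow> Phi b0) (at b0)" using cPhi by (simp add: isCont_def)
    then have "eventually (\<lambda>b. Phi b > 0) (at b0)" using Phi0 by (rule order_tendstoD(1))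
    then show ?thesis unfolding at_eq_sup_left_right[of b0] eventually_sup by simp
  qed
  have ev2: "eventually (\<lambda>b. b \<in> {max 0 xp <..< b0}) (at_left b0)"
    by (rule eventually_at_left_real) (use xpb0 b0 in simp)
  obtain bl where bl: "bl < b0" and blH: "\<And>y. bl < y \<Longrightarrow> y < b0 \<Longrightarrow> Phi y > 0 \<and> y \<in> {max 0 xp <..< b0}"
    using eventually_conj[OF ev1 ev2] unfolding eventually_at_left_field by blast
  define \<delta> where "\<delta> = b0 - bl"
  have d: "\<delta> > 0" using bl by (simp add: \<delta>_def)
  show ?thesis
  proof (intro exI[of _ \<delta>] conjI allI impI d)
    fix b assume "\<alpha> / \<rho> - \<delta> < b \<and> b < \<alpha> / \<rho>"
    then have bb: "bl < b" "b < b0" by (auto simp: \<delta>_def b0_def)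
    from blH[OF bb] have Pb: "Phi b > 0" and bpos: "b > 0" and bxp: "b > xp" by auto
    have sub: "\<rho> * b < \<alpha>" using bb(2) pos unfolding b0_def by (simp add: less_divide_eq mult.commute)
    show "loc_asympt_stable (sir_field \<alpha> b \<gamma> \<eta> \<rho>) (1, 0, 0)"
      by (rule dfe_las[OF pos(1) bpos pos(2-5) sub])
    have R0RC: "RC \<alpha> \<gamma> \<eta> \<rho> \<le> R0 \<alpha> b \<rho>"
      unfolding R0_def F(5) using pos bxp by (simp add: divide_right_mono mult_left_mono less_imp_le)
    have R01: "R0 \<alpha> b \<rho> < 1" unfolding R0_def using sub pos by simp
    have "{x. endemic_equilibrium \<alpha> b \<gamma> \<eta> \<rho> x} = {E_plus \<alpha> b \<gamma> \<eta> \<rho>, E_minus \<alpha> b \<gamma> \<eta> \<rho>}"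
      using alg_main[OF pos(1) bpos pos(2-5) ga rs] R0RC R01 by blast
    then show EE: "endemic_equilibrium \<alpha> b \<gamma> \<eta> \<rho> (E_minus \<alpha> b \<gamma> \<eta> \<rho>)" by blast
    obtain Ss Is Rs where Eb: "E_minus \<alpha> b \<gamma> \<eta> \<rho> = (Ss, Is, Rs)" by (cases "E_minus \<alpha> b \<gamma> \<eta> \<rho>") auto
    show "unstable (sir_field \<alpha> b \<gamma> \<eta> \<rho>) (E_minus \<alpha> b \<gamma> \<eta> \<rho>)"
      unfolding Eb
    proof (rule em_unstable[OF pos(1) bpos pos(2-5) _ a0_def c0_def sh])
      show "endemic_equilibrium \<alpha> b \<gamma> \<eta> \<rho> (Ss, Is, Rs)" using EE Eb by simp
      show "\<bar>\<alpha> / \<rho> - b * Ss\<bar> / 2 + Is * (2 * (b * (1 + \<bar>a0 - c0\<bar>) + (\<bar>a0\<bar> + c0) * (sgf b + b)))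
                  < min (Kf b * sgf b / 4) (min (\<gamma> / 2) (\<eta> / 2))"
        using Pb unfolding Phi_def Eb by simp
    qed (simp_all add: sgf_def Kf_def)
  next
    fix b assume "\<alpha> / \<rho> < b \<and> b < \<alpha> / \<rho> + \<delta>"
    then have bb: "b0 < b" by (simp add: b0_def)
    then have bpos: "b > 0" using b0 by simp
    have sup: "\<rho> * b > \<alpha>" using bb pos unfolding b0_def by (simp add: divide_less_eq mult.commute)
    show "unstable (sir_field \<alpha> b \<gamma> \<eta> \<rho>) (1, 0, 0)"
      by (rule dfe_unstable[OF pos(1) bpos pos(2-5) sup])
  next
    have "((\<lambda>b. E_minus \<alpha> b \<gamma> \<eta> \<rho>) \<longlongrightarrow> (1, 0, 0)) (at b0)"
      using cE Em0 by (simp add: isCont_def)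
    then show "((\<lambda>b. E_minus \<alpha> b \<gamma> \<eta> \<rho>) \<longlongrightarrow> (1, 0, 0)) (at_left (\<alpha> / \<rho>))"
      unfolding b0_def[symmetric] by (simp add: filterlim_at_split)
  qed
qed

theorem theorem4:
  fixes \<alpha> \<beta> \<gamma> \<eta> \<rho> :: real
  assumes "\<alpha> > 0" "\<beta> > 0" "\<gamma> > 0" "\<eta> > 0"
    and "0 < \<rho>" "\<rho> < 1" "\<gamma> \<ge> \<alpha>"
    and "\<rho> < rho_star \<alpha> \<gamma> \<eta>"
  shows
    "(R0 \<alpha> \<beta> \<rho> < RC \<alpha> \<gamma> \<eta> \<rho> \<longrightarrow>
        {x. endemic_equilibrium \<alpha> \<beta> \<gamma> \<eta> \<rho> x} = {})
     \<and> (RC \<alpha> \<gamma> \<eta> \<rho> \<le> R0 \<alpha> \<beta> \<rho> \<and> R0 \<alpha> \<beta> \<rho> < 1 \<longrightarrow>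
        {x. endemic_equilibrium \<alpha> \<beta> \<gamma> \<eta> \<rho> x}
          = {E_plus \<alpha> \<beta> \<gamma> \<eta> \<rho>, E_minus \<alpha> \<beta> \<gamma> \<eta> \<rho>}
        \<and> (E_plus \<alpha> \<beta> \<gamma> \<eta> \<rho> = E_minus \<alpha> \<beta> \<gamma> \<eta> \<rho>
             \<longleftrightarrow> RC \<alpha> \<gamma> \<eta> \<rho> = R0 \<alpha> \<beta> \<rho>))
     \<and> (1 \<le> R0 \<alpha> \<beta> \<rho> \<longrightarrow>
        {x. endemic_equilibrium \<alpha> \<beta> \<gamma> \<eta> \<rho> x} = {E_plus \<alpha> \<beta> \<gamma> \<eta> \<rho>})
     \<and> (\<exists>\<delta>>0.
          (\<forall>b. \<alpha> / \<rho> - \<delta> < b \<and> b < \<alpha> / \<rho> \<longrightarrow>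
              loc_asympt_stable (sir_field \<alpha> b \<gamma> \<eta> \<rho>) (1, 0, 0)
              \<and> endemic_equilibrium \<alpha> b \<gamma> \<eta> \<rho> (E_minus \<alpha> b \<gamma> \<eta> \<rho>)
              \<and> unstable (sir_field \<alpha> b \<gamma> \<eta> \<rho>) (E_minus \<alpha> b \<gamma> \<eta> \<rho>))
          \<and> (\<forall>b. \<alpha> / \<rho> < b \<and> b < \<alpha> / \<rho> + \<delta> \<longrightarrow>
              unstable (sir_field \<alpha> b \<gamma> \<eta> \<rho>) (1, 0, 0))
          \<and> ((\<lambda>b. E_minus \<alpha> b \<gamma> \<eta> \<rho>) \<longlongrightarrow> (1, 0, 0)) (at_left (\<alpha> / \<rho>)))"
proof -
  have A: "(R0 \<alpha> \<beta> \<rho> < RC \<alpha> \<gamma> \<eta> \<rho> \<longrightarrow>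
        {x. endemic_equilibrium \<alpha> \<beta> \<gamma> \<eta> \<rho> x} = {})
     \<and> (RC \<alpha> \<gamma> \<eta> \<rho> \<le> R0 \<alpha> \<beta> \<rho> \<and> R0 \<alpha> \<beta> \<rho> < 1 \<longrightarrow>
        {x. endemic_equilibrium \<alpha> \<beta> \<gamma> \<eta> \<rho> x}
          = {E_plus \<alpha> \<beta> \<gamma> \<eta> \<rho>, E_minus \<alpha> \<beta> \<gamma> \<eta> \<rho>}
        \<and> (E_plus \<alpha> \<beta> \<gamma> \<eta> \<rho> = E_minus \<alpha> \<beta> \<gamma> \<eta> \<rho>
             \<longleftrightarrow> RC \<alpha> \<gamma> \<eta> \<rho> = R0 \<alpha> \<beta> \<rho>))
     \<and> (1 \<le> R0 \<alpha> \<beta> \<rho> \<longrightarrow>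
        {x. endemic_equilibrium \<alpha> \<beta> \<gamma> \<eta> \<rho> x} = {E_plus \<alpha> \<beta> \<gamma> \<eta> \<rho>})"
    by (rule alg_main[OF assms(1-8)])
  have B: "\<exists>\<delta>>0.
          (\<forall>b. \<alpha> / \<rho> - \<delta> < b \<and> b < \<alpha> / \<rho> \<longrightarrow>
              loc_asympt_stable (sir_field \<alpha> b \<gamma> \<eta> \<rho>) (1, 0, 0)
              \<and> endemic_equilibrium \<alpha> b \<gamma> \<eta> \<rho> (E_minus \<alpha> b \<gamma> \<eta> \<rho>)
              \<and> unstable (sir_field \<alpha> b \<gamma> \<eta> \<rho>) (E_minus \<alpha> b \<gamma> \<eta> \<rho>))
          \<and> (\<forall>b. \<alpha> / \<rho> < b \<and> b < \<alpha> / \<rho> + \<delta> \<longrightarrow>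
              unstable (sir_field \<alpha> b \<gamma> \<eta> \<rho>) (1, 0, 0))
          \<and> ((\<lambda>b. E_minus \<alpha> b \<gamma> \<eta> \<rho>) \<longlongrightarrow> (1, 0, 0)) (at_left (\<alpha> / \<rho>))"
    by (rule bifurcation[OF assms(1) assms(3-8)])
  show ?thesis
    apply (rule conjI, rule A[THEN conjunct1])
    apply (rule conjI, rule A[THEN conjunct2, THEN conjunct1])
    apply (rule conjI, rule A[THEN conjunct2, THEN conjunct2])
    by (rule B)
qed

end
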